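(* Let $\mathbb{F}_q$ be a finite field of characteristic $p$, let $r,v,k,t$ be positive integers, and let $f(x):=x^r h_k(x^v)^t$ where $h_k(x):=x^{k-1}+x^{k-2}+\dots+1$. Let $s:=\gcd(v,q-1)$, $d:=(q-1)/s$ and $e:=v/s$. Suppose that $\gcd(r,s)=\gcd(d,k)=1$, that $\gcd(d,2r+vt(k-1))\le 2$, that $k^{st}\equiv (-1)^{(d+1)(r+1)}\pmod{p}$, and that $d$ is an odd prime. Pick $\omega\in\mathbb{F}_q$ of order $d$. Consider the condition \[( * )\qquad \frac{\zeta^k-\zeta^{-k}}{\zeta-\zeta^{-1}}\in\mu_{st}\ \text{ for every } \zeta\in\mu_d\setminus\mu_1.\] Then: (a) If $( * )$ holds then $f$ permutes $\mathbb{F}_q$. (b) If $d=3$ then $f$ permutes $\mathbb{F}_q$. (c) If $d=5$ then $f$ permutes $\mathbb{F}_q$ if and only if $( * )$ holds. (d) If $d=7$ then $f$ permutes $\mathbb{F}_q$ if and only if either $( * )$ holds or there exists $\epsilon\in\{1,-1\}$ such that \[\left(\frac{\omega^{ike}-\omega^{-ike}}{\omega^{ie}-\omega^{-ie}}\right)^{st}=\omega^{2\epsilon(2r+(k-1)vt)i}\] for every $i\in\{1,2,4\}$. (e) If $d=11$ then $f$ permutes $\mathbb{F}_q$ if and only if either $( * )$ holds or there is some $\psi\in\mathcal{C}$ such that \[\left(\frac{\omega^{ike}-\omega^{-ike}}{\omega^{ie}-\omega^{-ie}}\right)^{st}=\omega^{(2r+(k-1)vt)\psi(i)}\] for every $i\in(\mathbb{F}_{11}^*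 )^2$, where $\mathcal{C}$ is the union of the sets $\{i\mapsto mi : m\in\{\pm3,\pm5\}\}$, $\{i\mapsto 5m^3i^4+m^7i^3-2mi^2-4m^5i : m\in\mathbb{F}_{11}^*\}$ and $\{i\mapsto 4m^3i^4+m^7i^3-2mi^2-5m^5i : m\in\mathbb{F}_{11}^*\}$ (functions $\mathbb{F}_{11}\to\mathbb{F}_{11}$).
   Context: $\mu_n$ denotes the set of $n$-th roots of unity in $\mathbb{F}_q$ (so $\mu_1=\{1\}$). Since $\omega$ has order $d$, $\omega^a$ is well defined for $a\in\mathbb{Z}/d\mathbb{Z}=\mathbb{F}_d$, and integers $i$ are identified with their residues mod $d$. A polynomial permutes $\mathbb{F}_q$ if the induced map is a bijection. *)

theory Defs
  imports "HOL-Number_Theory.Number_Theory"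
begin

definition hk :: "nat \<Rightarrow> 'a::comm_ring_1 \<Rightarrow> 'a" where
  "hk k x = (\<Sum>j<k. x ^ j)"

definition fpoly :: "nat \<Rightarrow> nat \<Rightarrow> nat \<Rightarrow> nat \<Rightarrow> 'a::comm_ring_1 \<Rightarrow> 'a" where
  "fpoly r v k t x = x ^ r * (hk k (x ^ v)) ^ t"

definition roots_unity :: "nat \<Rightarrow> 'a::comm_ring_1 set" where
  "roots_unity n = {x. x ^ n = 1}"

definition has_order :: "'a::comm_ring_1 \<Rightarrow> nat \<Rightarrow> bool" where
  "has_order x n \<longleftrightarrow> 0 < n \<and> x ^ n = 1 \<and> (\<forall>m. 0 < m \<and> m < n \<longrightarrow> x ^ m \<noteq> 1)"

definition cond_star :: "nat \<Rightarrow> nat \<Rightarrow> nat \<Rightarrow> nat \<Rightarrow> 'a::field itself \<Rightarrow> bool" where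
  "cond_star d k s t _ \<longleftrightarrow>
     (\<forall>\<zeta>::'a. \<zeta> \<in> roots_unity d - roots_unity 1 \<longrightarrow>
        (\<zeta> ^ k - inverse \<zeta> ^ k) / (\<zeta> - inverse \<zeta>) \<in> roots_unity (s * t))"

definition ratio :: "'a::field \<Rightarrow> nat \<Rightarrow> nat \<Rightarrow> int \<Rightarrow> 'a" where
  "ratio \<omega> k e i = (\<omega> powi (i * int k * int e) - \<omega> powi (- (i * int k * int e)))
                   / (\<omega> powi (i * int e) - \<omega> powi (- (i * int e)))"

text \<open>nonzero squares of F_11, represented by integers in 1..10\<close>
definition sq11 :: "int set" where
  "sq11 = {i. 1 \<le> i \<and> i \<le> 10 \<and> (\<exists>j. [j ^ 2 = i] (mod 11))}"

text \<open>the set C of maps F_11 -> F_11, represented as integer maps (taken mod 11)\<close>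
definition C11 :: "(int \<Rightarrow> int) set" where
  "C11 = {(\<lambda>i. m * i) | m. m \<in> {3, -3, 5, -5}}
       \<union> {(\<lambda>i. 5 * m^3 * i^4 + m^7 * i^3 - 2 * m * i^2 - 4 * m^5 * i) | m. 1 \<le> m \<and> m \<le> 10}
       \<union> {(\<lambda>i. 4 * m^3 * i^4 + m^7 * i^3 - 2 * m * i^2 - 5 * m^5 * i) | m. 1 \<le> m \<and> m \<le> 10}"

end

theory Submission
  imports Defs "HOL-Computational_Algebra.Polynomial"
begin

lemma card_pow_eq_le:
  fixes a :: "'a::field"
  assumes "0 < n"
  shows "card {x::'a. x ^ n = a} \<le> n"
proof -
  let ?p = "monom (1::'a) n + [:-a:]"
  have deg: "degree ?p = n"
    using assms by (subst degree_add_eq_left) (simp_all add: degree_monom_eq)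
  have "?p \<noteq> 0" using deg assms by auto
  moreover have "{x. x ^ n = a} = {x. poly ?p x = 0}" by (simp add: poly_monom)
  ultimately show ?thesis using card_poly_roots_bound[of ?p] deg by simp
qed

lemma fermat_field:
  fixes x :: "'a::{finite,field}"
  assumes "x \<noteq> 0"
  shows "x ^ (card (UNIV::'a set) - 1) = 1"
proof -
  let ?U = "UNIV - {0::'a}"
  have inj: "inj_on (\<lambda>y. x * y) ?U" using assms by (auto simp: inj_on_def)
  have img: "(\<lambda>y. x * y) ` ?U = ?U"
  proof
    show "(\<lambda>y. x*y) ` ?U \<subseteq> ?U" using assms by auto
    show "?U \<subseteq> (\<lambda>y. x*y) ` ?U"
    proof
      fix z assume "z \<in> ?U"
      then have "z = x * (z / x)" "z / x \<in> ?U" using assms by auto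
      then show "z \<in> (\<lambda>y. x*y) ` ?U" by blast
    qed
  qed
  have "prod id ?U = prod (\<lambda>y. x*y) ?U"
    using prod.reindex[OF inj, of id] img by simp
  also have "\<dots> = x ^ card ?U * prod id ?U" by (simp add: prod.distrib)
  finally have "x ^ card ?U * prod id ?U = 1 * prod id ?U" by simp
  moreover have "prod id ?U \<noteq> 0" by simp
  ultimately have "x ^ card ?U = 1" by (simp only: mult_cancel_right) simp
  moreover have "card ?U = card (UNIV::'a set) - 1" by (simp add: card_Diff_singleton)
  ultimately show ?thesis by simp
qed

lemma ho_pos: "has_order w d \<Longrightarrow> 0 < d" by (simp add: has_order_def)

lemma ho_nz: "has_order (w::'a::field) d \<Longrightarrow> w \<noteq> 0"
  unfolding has_order_def by (auto simp: power_0_left)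

lemma ho_pow_mod:
  assumes "has_order w d" shows "w ^ a = w ^ (a mod d)"
proof -
  have "w ^ a = w ^ (d * (a div d) + a mod d)" by simp
  also have "\<dots> = (w ^ d) ^ (a div d) * w ^ (a mod d)" by (simp only: power_add power_mult)
  also have "\<dots> = w ^ (a mod d)" using assms by (simp add: has_order_def)
  finally show ?thesis .
qed

lemma ho_pow_eq_1:
  assumes "has_order w d" shows "w ^ a = 1 \<longleftrightarrow> d dvd a"
proof
  assume "w ^ a = 1"
  then have "w ^ (a mod d) = 1" using ho_pow_mod[OF assms] by simp
  moreover have "a mod d < d" using ho_pos[OF assms] by simp
  ultimately have "a mod d = 0"
  proof (rule_tac ccontr)
    assume "w ^ (a mod d) = 1" "a mod d < d" "a mod d \<noteq> 0"
    then show False using assms unfolding has_order_def by auto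
  qed
  then show "d dvd a" by auto
next
  assume "d dvd a" then obtain m where "a = d * m" by auto
  then show "w ^ a = 1" using assms by (simp add: power_mult has_order_def)
qed

lemma ho_pow_eq_aux:
  assumes "has_order (w::'a::field) d" "x \<le> y" "y < d" "w ^ x = w ^ y"
  shows "x = y"
proof -
  have "w ^ y = w ^ x * w ^ (y - x)" using assms(2) by (simp add: power_add[symmetric])
  then have "w ^ (y - x) = 1" using assms(4) ho_nz[OF assms(1)] by simp
  then have "d dvd (y - x)" using ho_pow_eq_1[OF assms(1)] by simp
  moreover have "y - x < d" using assms by linarith
  ultimately have "y - x = 0" by (cases "y - x = 0") (auto dest: dvd_imp_le)
  then show ?thesis using assms(2) by simp
qed

lemma ho_pow_eq:
  assumes "has_order (w::'a::field) d" shows "w ^ a = w ^ b \<longleftrightarrow> a mod d = b mod d"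
proof
  assume h: "w ^ a = w ^ b"
  have lt: "a mod d < d" "b mod d < d" using ho_pos[OF assms] by auto
  have e: "w ^ (a mod d) = w ^ (b mod d)" using h ho_pow_mod[OF assms] by metis
  show "a mod d = b mod d"
  proof (cases "a mod d \<le> b mod d")
    case True then show ?thesis using ho_pow_eq_aux[OF assms True lt(2) e] by simp
  next
    case False then show ?thesis using ho_pow_eq_aux[OF assms _ lt(1) e[symmetric]] by simp
  qed
next
  assume "a mod d = b mod d"
  then show "w ^ a = w ^ b" using ho_pow_mod[OF assms] by metis
qed

lemma ho_powi:
  assumes "has_order (w::'a::field) d" shows "w powi m = w ^ nat (m mod int d)"
proof -
  have nz: "w \<noteq> 0" using ho_nz[OF assms] .
  have "w powi m = w powi (int d * (m div int d) + m mod int d)" by simp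
  also have "\<dots> = w powi (int d * (m div int d)) * w powi (m mod int d)"
    by (rule power_int_add) (simp add: nz)
  also have "w powi (int d * (m div int d)) = 1"
    using assms by (simp add: power_int_mult has_order_def)
  also have "w powi (m mod int d) = w ^ nat (m mod int d)"
    using ho_pos[OF assms] by (simp add: power_int_nonneg_exp)
  finally show ?thesis by simp
qed

lemma ho_pow_powi_eq:
  assumes "has_order (w::'a::field) d"
  shows "w ^ a = w powi m \<longleftrightarrow> int a mod int d = m mod int d"
proof -
  have p: "0 < d" using ho_pos[OF assms] .
  have lt: "nat (m mod int d) < d" using p by (simp add: nat_less_iff)
  have "w ^ a = w powi m \<longleftrightarrow> a mod d = nat (m mod int d) mod d"
    using ho_powi[OF assms] ho_pow_eq[OF assms] by simp
  also have "\<dots> \<longleftrightarrow> a mod d = nat (m mod int d)" using lt by simp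
  also have "\<dots> \<longleftrightarrow> int (a mod d) = m mod int d" using p by auto
  also have "\<dots> \<longleftrightarrow> int a mod int d = m mod int d" by (simp add: zmod_int)
  finally show ?thesis .
qed

lemma ho_image:
  fixes w :: "'a::{finite,field}"
  assumes "has_order w d"
  shows "roots_unity d = (\<lambda>j. w ^ j) ` {..<d}" "inj_on (\<lambda>j. w ^ j) {..<d}"
proof -
  show inj: "inj_on (\<lambda>j. w ^ j) {..<d}"
    using ho_pow_eq[OF assms] by (auto simp: inj_on_def)
  have sub: "(\<lambda>j. w ^ j) ` {..<d} \<subseteq> roots_unity d"
  proof
    fix x assume "x \<in> (\<lambda>j. w ^ j) ` {..<d}"
    then obtain j where "x = w ^ j" by auto
    then have "x ^ d = (w ^ d) ^ j" by (simp add: power_mult[symmetric] mult.commute)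
    then show "x \<in> roots_unity d" using assms by (simp add: roots_unity_def has_order_def)
  qed
  have "card (roots_unity d :: 'a set) \<le> d"
    unfolding roots_unity_def using card_pow_eq_le ho_pos[OF assms] by blast
  moreover have "card ((\<lambda>j. w ^ j) ` {..<d}) = d" using card_image[OF inj] by simp
  ultimately have "(\<lambda>j. w ^ j) ` {..<d} = roots_unity d"
    using sub by (intro card_seteq) auto
  then show "roots_unity d = (\<lambda>j. w ^ j) ` {..<d}" by simp
qed

lemma ho_pow_coprime:
  assumes "has_order (w::'a::field) d" "coprime c d"
  shows "has_order (w ^ c) d"
  unfolding has_order_def
proof (intro conjI allI impI)
  show "0 < d" using ho_pos[OF assms(1)] .
  have "(w ^ c) ^ d = (w ^ d) ^ c" by (metis power_mult mult.commute)
  then show "(w ^ c) ^ d = 1" using assms(1) by (simp add: has_order_def)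
  fix m assume m: "0 < m \<and> m < d"
  show "(w ^ c) ^ m \<noteq> 1"
  proof
    assume "(w ^ c) ^ m = 1"
    then have "w ^ (m * c) = 1" by (simp add: power_mult mult.commute)
    then have "d dvd m * c" using ho_pow_eq_1[OF assms(1)] by simp
    then have "d dvd m" using assms(2) by (simp add: coprime_commute coprime_dvd_mult_left_iff)
    then show False using m by (auto dest: dvd_imp_le)
  qed
qed

locale cor =
  fixes r v k t :: nat and w :: "'a::{finite,field}" and q s d e c :: nat
  assumes q_def: "q = card (UNIV :: 'a set)"
    and s_def: "s = gcd v (q - 1)" and d_def: "d = (q - 1) div s" and e_def: "e = v div s"
    and c_def: "c = 2 * r + (k - 1) * v * t"
    and pos: "0 < r" "0 < v" "0 < k" "0 < t"
    and gcd1: "gcd r s = 1" and gcd2: "gcd d k = 1"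
    and gcd3: "gcd d (2 * r + v * t * (k - 1)) \<le> 2"
    and cong: "[int k ^ (s * t) = (-1) ^ ((d + 1) * (r + 1))] (mod int (semiring_char TYPE('a)))"
    and dprime: "prime d" and dodd: "odd d"
    and ord: "has_order w d"
begin

definition "eta = w ^ c"
definition "g y = y ^ r * hk k (y ^ e) ^ (t * s)"
definition "mu = (roots_unity d :: 'a set)"

lemma q2: "2 \<le> q"
proof -
  have "card {0::'a, 1} \<le> card (UNIV :: 'a set)" by (rule card_mono) auto
  then show ?thesis using q_def by simp
qed

lemma s_pos: "0 < s" using s_def pos by simp

lemma sd: "s * d = q - 1"
  using d_def s_def by simp

lemma se: "s * e = v"
  using e_def s_def by simp

lemma d3: "3 \<le> d"
proof -
  have "2 \<le> d" using dprime prime_ge_2_nat by blast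
  moreover have "d \<noteq> 2" using dodd by auto
  ultimately show ?thesis by linarith
qed

lemma cop_ed: "coprime e d"
  using div_gcd_coprime[of v "q - 1"] pos s_def d_def e_def by simp

lemma ndc: "\<not> d dvd c"
proof
  assume "d dvd c"
  then have "gcd d (2 * r + v * t * (k - 1)) = d" using c_def by (simp add: mult_ac gcd_nat.absorb1)
  then show False using gcd3 d3 by simp
qed

lemma ndk: "\<not> d dvd k"
proof
  assume "d dvd k"
  then have "gcd d k = d" by (simp add: gcd_nat.absorb1)
  then show False using gcd2 d3 by simp
qed

lemma nde: "\<not> d dvd e"
proof
  assume "d dvd e"
  then have "d dvd gcd e d" by simp
  then show False using cop_ed d3 by simp
qed

lemma eta_ord: "has_order eta d"
  unfolding eta_def
  by (rule ho_pow_coprime[OF ord]) (use prime_imp_coprime[OF dprime ndc] in \<open>simp add: coprime_commute\<close>)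

lemma mu_w: "mu = (\<lambda>j. w ^ j) ` {..<d}" "inj_on (\<lambda>j. w ^ j) {..<d}"
  using ho_image[OF ord] mu_def by auto

lemma mu_eta: "mu = (\<lambda>j. eta ^ j) ` {..<d}" "inj_on (\<lambda>j. eta ^ j) {..<d}"
  using ho_image[OF eta_ord] mu_def by auto

lemma card_mu: "card mu = d"
  using mu_w card_image by (metis card_lessThan)

lemma fermat_sd: "x \<noteq> 0 \<Longrightarrow> (x::'a) ^ (s * d) = 1"
  using fermat_field[of x] sd q_def by simp

lemma pow_s_mu: "(x::'a) \<noteq> 0 \<Longrightarrow> x ^ s \<in> mu"
  using fermat_sd[of x] by (simp add: mu_def roots_unity_def power_mult[symmetric])

lemma mu_nz: "y \<in> mu \<Longrightarrow> y \<noteq> 0"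
  using d3 by (auto simp: mu_def roots_unity_def power_0_left)

lemma surj_s: "y \<in> mu \<Longrightarrow> \<exists>x. x \<noteq> 0 \<and> x ^ s = y"
proof -
  assume y: "y \<in> mu"
  let ?P = "(\<lambda>x::'a. x ^ s) ` (UNIV - {0})"
  have sub: "?P \<subseteq> mu" using pow_s_mu by auto
  have cov: "UNIV - {0} \<subseteq> (\<Union>z\<in>?P. {x::'a. x ^ s = z})" by auto
  have "s * d = card (UNIV - {0::'a})" using sd q_def by (simp add: card_Diff_singleton)
  also have "\<dots> \<le> card (\<Union>z\<in>?P. {x::'a. x ^ s = z})" by (rule card_mono[OF _ cov]) simp
  also have "\<dots> \<le> (\<Sum>z\<in>?P. card {x::'a. x ^ s = z})" by (rule card_UN_le) simp
  also have "\<dots> \<le> (\<Sum>z\<in>?P. s)" by (rule sum_mono) (use card_pow_eq_le s_pos in blast)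
  also have "\<dots> = card ?P * s" by simp
  finally have "d \<le> card ?P" using s_pos by (simp add: mult.commute)
  then have "?P = mu" using sub card_mu by (intro card_seteq) auto
  then have "y \<in> ?P" using y by simp
  then show ?thesis by auto
qed

lemma fpoly_eq: "fpoly r v k t x = x ^ r * hk k ((x ^ s) ^ e) ^ t"
  unfolding fpoly_def se[symmetric] by (simp add: power_mult)

lemma f0: "fpoly r v k t (0::'a) = 0"
  using pos by (simp add: fpoly_def)

lemma fs: "(fpoly r v k t x) ^ s = g (x ^ s)"
  unfolding fpoly_eq g_def
  by (simp add: power_mult_distrib power_mult[symmetric] mult.commute)

lemma g_mu: "y \<in> mu \<Longrightarrow> bij (fpoly r v k t :: 'a \<Rightarrow> 'a) \<Longrightarrow> g y \<in> mu"
proof -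
  assume y: "y \<in> mu" and b: "bij (fpoly r v k t :: 'a \<Rightarrow> 'a)"
  obtain x where x: "x \<noteq> 0" "x ^ s = y" using surj_s[OF y] by auto
  have "fpoly r v k t x \<noteq> 0" using x b f0 by (metis bij_def injD)
  then show ?thesis using pow_s_mu fs x by metis
qed

lemma unit_coprime:
  assumes "(z::'a) ^ r = 1" "z ^ s = 1" shows "z = 1"
proof -
  obtain a b where ab: "r * a = s * b + gcd r s" using bezout_nat[of r s] pos by auto
  have "z ^ (r * a) = 1" using assms by (simp add: power_mult)
  moreover have "z ^ (r * a) = z ^ (s * b) * z" using ab gcd1 by (simp add: power_add)
  moreover have "z ^ (s * b) = 1" using assms by (simp add: power_mult)
  ultimately show ?thesis by simp
qed

lemma main_red: "bij (fpoly r v k t :: 'a \<Rightarrow> 'a) \<longleftrightarrow> bij_betw g mu mu"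
proof
  assume b: "bij (fpoly r v k t :: 'a \<Rightarrow> 'a)"
  have "g ` mu = mu"
  proof
    show "g ` mu \<subseteq> mu" using g_mu b by auto
    show "mu \<subseteq> g ` mu"
    proof
      fix z assume z: "z \<in> mu"
      obtain y where y: "y \<noteq> 0" "y ^ s = z" using surj_s[OF z] by auto
      obtain x where x: "fpoly r v k t x = y" using b by (metis bij_def surjD)
      have "x \<noteq> 0" using x y f0 by auto
      then have "x ^ s \<in> mu" by (rule pow_s_mu)
      moreover have "g (x ^ s) = z" using fs[of x] x y by simp
      ultimately show "z \<in> g ` mu" by blast
    qed
  qed
  then show "bij_betw g mu mu"
    by (simp add: bij_betw_def endo_inj_surj eq_card_imp_inj_on)
next
  assume b: "bij_betw g mu mu"
  let ?f = "fpoly r v k t :: 'a \<Rightarrow> 'a"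
  have nz: "x \<noteq> 0 \<Longrightarrow> ?f x \<noteq> 0" for x
  proof -
    assume "x \<noteq> 0"
    then have "g (x ^ s) \<in> mu" using b pow_s_mu by (auto simp: bij_betw_def)
    then have "?f x ^ s \<noteq> 0" using fs mu_nz by metis
    then show ?thesis using s_pos by auto
  qed
  have "inj ?f"
  proof (rule injI)
    fix x y assume eq: "?f x = ?f y"
    show "x = y"
    proof (cases "x = 0 \<or> y = 0")
      case True then show ?thesis using eq nz f0 by metis
    next
      case False
      then have x: "x \<noteq> 0" and y: "y \<noteq> 0" by auto
      have "g (x ^ s) = g (y ^ s)" using eq fs by metis
      then have xs: "x ^ s = y ^ s"
        using b pow_s_mu[OF x] pow_s_mu[OF y] by (auto simp: bij_betw_def inj_on_def)
      define z where "z = y / x"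
      have yz: "y = x * z" using x by (simp add: z_def)
      have zs: "z ^ s = 1" using xs x y by (simp add: z_def power_divide)
      have "?f y = y ^ r * hk k ((y ^ s) ^ e) ^ t" by (rule fpoly_eq)
      also have "\<dots> = (x * z) ^ r * hk k ((x ^ s) ^ e) ^ t" using yz xs by simp
      also have "\<dots> = z ^ r * ?f x" by (simp add: fpoly_eq power_mult_distrib mult_ac)
      finally have "?f y = z ^ r * ?f x" .
      then have "z ^ r = 1" using eq nz[OF x] by simp
      then have "z = 1" using unit_coprime zs by simp
      then show ?thesis using yz by simp
    qed
  qed
  then show "bij ?f" by (simp add: bij_def finite_UNIV_inj_surj)
qed

end

lemma hk_ratio:
  fixes z :: "'a::field"
  assumes z: "z \<noteq> 0" and z2: "z ^ 2 \<noteq> 1" and k: "0 < k"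
  shows "hk k (z ^ 2) = z ^ (k - 1) * ((z ^ k - inverse z ^ k) / (z - inverse z))"
proof -
  obtain m where km: "k = Suc m" using k by (cases k) auto
  have den: "z - inverse z = (z ^ 2 - 1) / z" using z by (simp add: field_simps power2_eq_square)
  have den0: "z ^ 2 - 1 \<noteq> 0" using z2 by simp
  have num: "z ^ m * (z ^ Suc m - inverse z ^ Suc m) = (z ^ (2 * Suc m) - 1) / z"
  proof -
    have eq: "m * 3 = m + (m + m)" by simp
    show ?thesis using z by (simp add: field_simps power_inverse power_add[symmetric] mult_2 power_Suc2 eq)
  qed
  have "hk k (z ^ 2) = (1 - (z ^ 2) ^ k) / (1 - z ^ 2)"
    unfolding hk_def using z2 by (simp add: sum_gp_strict)
  also have "\<dots> = (z ^ (2 * k) - 1) / (z ^ 2 - 1)"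
    using den0 by (simp add: power_mult[symmetric] field_simps)
  also have "\<dots> = ((z ^ (2 * k) - 1) / z) / ((z ^ 2 - 1) / z)" using z by simp
  also have "\<dots> = (z ^ m * (z ^ Suc m - inverse z ^ Suc m)) / ((z ^ 2 - 1) / z)"
    unfolding km using num by simp
  also have "\<dots> = z ^ (k - 1) * ((z ^ k - inverse z ^ k) / (z - inverse z))"
    unfolding den km by (simp only: times_divide_eq_right diff_Suc_1)
  finally show ?thesis .
qed

context cor begin

definition "R (z::'a) = (z ^ k - inverse z ^ k) / (z - inverse z)"
definition "rho i = R (w ^ (i * e)) ^ (s * t)"
definition "B i = (if i = 0 then 0 else SOME j. j < d \<and> eta ^ j = rho i)"

lemma ratio_R: "ratio w k e (int i) = R (w ^ (i * e))"
proof -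
  have 1: "w powi (int i * int k * int e) = (w ^ (i * e)) ^ k"
  proof -
    have eq: "int i * int k * int e = int (i * e * k)" by simp
    show ?thesis by (simp only: eq power_int_of_nat power_mult)
  qed
  have 2: "w powi (int i * int e) = w ^ (i * e)"
  proof -
    have eq: "int i * int e = int (i * e)" by simp
    show ?thesis by (simp only: eq power_int_of_nat)
  qed
  show ?thesis unfolding ratio_def R_def power_int_minus 1 2 by (simp add: power_inverse)
qed

lemma w_nz: "w \<noteq> 0" using ho_nz[OF ord] .

lemma nd_prod: "0 < i \<Longrightarrow> i < d \<Longrightarrow> \<not> d dvd (2 * i * e) \<and> \<not> d dvd (2 * i * e * k)"
proof -
  assume i: "0 < i" "i < d"
  have n2: "\<not> d dvd 2" using d3 by (auto dest: dvd_imp_le)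
  have ni: "\<not> d dvd i" using i by (auto dest: dvd_imp_le)
  show ?thesis using n2 ni nde ndk by (simp add: prime_dvd_mult_iff[OF dprime])
qed

lemma u_props:
  assumes "0 < i" "i < d"
  shows "w ^ (i * e) \<noteq> 0" "(w ^ (i * e)) ^ 2 \<noteq> 1" "((w ^ (i * e)) ^ 2) ^ k \<noteq> 1"
proof -
  show "w ^ (i * e) \<noteq> 0" using w_nz by simp
  have "(w ^ (i * e)) ^ 2 = w ^ (2 * i * e)" by (simp add: power_mult[symmetric] mult_ac)
  then show "(w ^ (i * e)) ^ 2 \<noteq> 1" using nd_prod[OF assms] ho_pow_eq_1[OF ord] by simp
  have "((w ^ (i * e)) ^ 2) ^ k = w ^ (2 * i * e * k)" by (simp add: power_mult[symmetric] mult_ac)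
  then show "((w ^ (i * e)) ^ 2) ^ k \<noteq> 1" using nd_prod[OF assms] ho_pow_eq_1[OF ord] by simp
qed

lemma R_nz:
  fixes z :: 'a
  assumes "z \<noteq> 0" "z ^ 2 \<noteq> 1" "(z ^ 2) ^ k \<noteq> 1"
  shows "R z \<noteq> 0"
proof -
  have a: "z - inverse z \<noteq> 0"
  proof
    assume "z - inverse z = 0"
    then have "z * z = 1" using assms(1) by (simp add: field_simps)
    then show False using assms(2) by (simp add: power2_eq_square)
  qed
  have b: "z ^ k - inverse z ^ k \<noteq> 0"
  proof
    assume "z ^ k - inverse z ^ k = 0"
    then have "z ^ k * z ^ k = 1" using assms(1) by (simp add: field_simps power_inverse)
    moreover have "(z ^ 2) ^ k = z ^ k * z ^ k" by (metis power_add power_mult mult_2 mult.commute)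
    ultimately show False using assms(3) by simp
  qed
  show ?thesis using a b by (simp add: R_def)
qed

lemma rho_mu: "0 < i \<Longrightarrow> i < d \<Longrightarrow> rho i \<in> mu"
proof -
  assume i: "0 < i" "i < d"
  have nz: "R (w ^ (i * e)) \<noteq> 0" using R_nz u_props[OF i] by blast
  have "rho i ^ d = (R (w ^ (i * e)) ^ (s * d)) ^ t"
    unfolding rho_def by (simp add: power_mult[symmetric] mult_ac)
  also have "\<dots> = 1" using fermat_sd[OF nz] by simp
  finally show ?thesis by (simp add: mu_def roots_unity_def)
qed

lemma B_prop: "0 < i \<Longrightarrow> i < d \<Longrightarrow> B i < d \<and> eta ^ B i = rho i"
proof -
  assume i: "0 < i" "i < d"
  have "\<exists>j. j < d \<and> eta ^ j = rho i" using rho_mu[OF i] mu_eta(1) by auto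
  then have "(SOME j. j < d \<and> eta ^ j = rho i) < d \<and> eta ^ (SOME j. j < d \<and> eta ^ j = rho i) = rho i"
    by (rule someI_ex)
  then show ?thesis using i unfolding B_def by simp
qed

lemma B_lt: "i < d \<Longrightarrow> B i < d"
  using B_prop[of i] d3 by (cases "i = 0") (simp_all add: B_def)

lemma B0: "B 0 = 0" by (simp add: B_def)

lemma eta_inj: "a < d \<Longrightarrow> b < d \<Longrightarrow> eta ^ a = eta ^ b \<Longrightarrow> a = b"
  using ho_pow_eq[OF eta_ord] by simp

lemma ratio_B: "0 < i \<Longrightarrow> i < d \<Longrightarrow> ratio w k e (int i) ^ (s * t) = eta ^ B i"
  using B_prop[of i] by (simp add: ratio_R rho_def)

lemma R_inv: "z \<noteq> 0 \<Longrightarrow> R (inverse z) = R z"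
proof -
  assume z: "z \<noteq> 0"
  have sw: "(a - b) / (c - d) = (b - a) / (d - c)" for a b c d :: 'a
  proof -
    have "(a - b) / (c - d) = (- (b - a)) / (- (d - c))" by simp
    also have "\<dots> = (b - a) / (d - c)" by (rule minus_divide_divide)
    finally show ?thesis .
  qed
  have "R (inverse z) = (inverse z ^ k - z ^ k) / (inverse z - z)" unfolding R_def by (simp only: inverse_inverse_eq)
  also have "\<dots> = R z" unfolding R_def by (rule sw)
  finally show ?thesis .
qed

lemma rho_sym: "0 < i \<Longrightarrow> i < d \<Longrightarrow> rho (d - i) = rho i"
proof -
  assume i: "0 < i" "i < d"
  have "w ^ ((d - i) * e) * w ^ (i * e) = w ^ (d * e)"
    using i by (simp add: power_add[symmetric] add_mult_distrib[symmetric])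
  also have "\<dots> = 1" using ord by (simp add: power_mult has_order_def)
  finally have "w ^ ((d - i) * e) = inverse (w ^ (i * e))"
    using w_nz by (simp add: field_simps)
  then show ?thesis unfolding rho_def using R_inv[of "w ^ (i * e)"] w_nz by simp
qed

lemma B_sym: "0 < i \<Longrightarrow> i < d \<Longrightarrow> B (d - i) = B i"
proof -
  assume i: "0 < i" "i < d"
  have i': "0 < d - i" "d - i < d" using i by auto
  have "eta ^ B (d - i) = eta ^ B i" using B_prop[OF i] B_prop[OF i'] rho_sym[OF i] by simp
  then show ?thesis using B_prop[OF i] B_prop[OF i'] by (intro eta_inj) auto
qed

lemma hk1: "hk k (1::'a) = of_nat k" by (simp add: hk_def)

lemma kpow: "(of_nat k :: 'a) ^ (s * t) = 1"
proof -
  have ev: "even ((d + 1) * (r + 1))" using dodd by simp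
  have "[int k ^ (s * t) = 1] (mod int CHAR('a))" using cong ev by simp
  then have "(of_int (int k ^ (s * t)) :: 'a) = of_int 1"
    by (simp only: of_int_eq_iff_cong_CHAR)
  then show ?thesis by simp
qed

lemma g_P: "i < d \<Longrightarrow> g (w ^ (2 * i)) = eta ^ ((i + B i) mod d)"
proof (cases "i = 0")
  case True
  then show ?thesis unfolding g_def using hk1 kpow B0 by (simp add: mult.commute)
next
  case False
  assume i: "i < d"
  then have i': "0 < i" "i < d" using False by auto
  let ?u = "w ^ (i * e)"
  have ue: "(w ^ (2 * i)) ^ e = ?u ^ 2" by (simp add: power_mult[symmetric] mult_ac)
  have hk: "hk k (?u ^ 2) = ?u ^ (k - 1) * R ?u"
    unfolding R_def using hk_ratio u_props[OF i'] pos(3) by blast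
  have "g (w ^ (2 * i)) = (w ^ (2 * i)) ^ r * (?u ^ (k - 1)) ^ (t * s) * rho i"
    unfolding g_def ue hk rho_def by (simp add: power_mult_distrib mult_ac)
  also have "(w ^ (2 * i)) ^ r * (?u ^ (k - 1)) ^ (t * s) = w ^ (i * c)"
  proof -
    have "(w ^ (2 * i)) ^ r * (?u ^ (k - 1)) ^ (t * s) = w ^ (2 * i * r + i * e * (k - 1) * (t * s))"
      by (simp add: power_mult[symmetric] power_add)
    also have "2 * i * r + i * e * (k - 1) * (t * s) = i * c"
      unfolding c_def se[symmetric] by (simp add: algebra_simps)
    finally show ?thesis .
  qed
  also have "w ^ (i * c) = eta ^ i" by (simp add: eta_def power_mult[symmetric] mult.commute)
  also have "rho i = eta ^ B i" using B_prop[OF i'] by simp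
  finally have "g (w ^ (2 * i)) = eta ^ (i + B i)" by (simp add: power_add)
  then show ?thesis using ho_pow_mod[OF eta_ord, of "i + B i"] by simp
qed

lemma P_inj: "inj_on (\<lambda>i. w ^ (2 * i)) {..<d}"
proof (rule inj_onI)
  fix i j assume ij: "i \<in> {..<d}" "j \<in> {..<d}" and eq: "w ^ (2 * i) = w ^ (2 * j)"
  then have "[2 * i = 2 * j] (mod d)" using ho_pow_eq[OF ord] by (simp add: cong_def)
  moreover have "coprime 2 d" using dodd by simp
  ultimately have "[i = j] (mod d)" using cong_mult_lcancel_nat[of 2 d i j] by simp
  then show "i = j" using ij cong_less_modulus_unique_nat by auto
qed

lemma P_img: "(\<lambda>i. w ^ (2 * i)) ` {..<d} = mu"
proof (rule card_seteq)
  show "finite mu" by simp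
  show "(\<lambda>i. w ^ (2 * i)) ` {..<d} \<subseteq> mu"
  proof
    fix x assume "x \<in> (\<lambda>i. w ^ (2 * i)) ` {..<d}"
    then obtain i where "x = w ^ (2 * i)" by auto
    then have "x ^ d = (w ^ d) ^ (2 * i)" by (simp add: power_mult[symmetric] mult.commute)
    then show "x \<in> mu" using ord by (simp add: mu_def roots_unity_def has_order_def)
  qed
  show "card mu \<le> card ((\<lambda>i. w ^ (2 * i)) ` {..<d})"
    using card_image[OF P_inj] card_mu by simp
qed

lemma bij_iff_inj: "bij_betw g mu mu \<longleftrightarrow> inj_on (\<lambda>i. (i + B i) mod d) {..<d}"
proof -
  let ?P = "\<lambda>i. w ^ (2 * i)"
  let ?N = "\<lambda>i. (i + B i) mod d"
  have gsub: "g ` mu \<subseteq> mu"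
  proof
    fix y assume "y \<in> g ` mu"
    then obtain x where x: "x \<in> mu" "y = g x" by auto
    have "x \<in> ?P ` {..<d}" using x P_img by simp
    then obtain i where "i < d" "x = ?P i" by auto
    then have "i < d" "y = g (?P i)" using x by auto
    then have y: "y = eta ^ ?N i" using g_P by simp
    have "?N i < d" using d3 by simp
    then show "y \<in> mu" unfolding y mu_eta(1) by blast
  qed
  have "bij_betw g mu mu \<longleftrightarrow> inj_on g mu"
  proof
    assume "inj_on g mu"
    then have "g ` mu = mu" using endo_inj_surj[OF _ gsub] by simp
    then show "bij_betw g mu mu" using \<open>inj_on g mu\<close> by (simp add: bij_betw_def)
  qed (simp add: bij_betw_def)
  also have "\<dots> \<longleftrightarrow> inj_on (g \<circ> ?P) {..<d}"
    using comp_inj_on_iff[OF P_inj, of g] unfolding P_img .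
  also have "\<dots> \<longleftrightarrow> inj_on (\<lambda>i. eta ^ ?N i) {..<d}"
    by (rule inj_on_cong) (simp add: g_P)
  also have "\<dots> \<longleftrightarrow> inj_on ?N {..<d}"
  proof
    assume "inj_on (\<lambda>i. eta ^ ?N i) {..<d}"
    then show "inj_on ?N {..<d}" unfolding inj_on_def by (metis (no_types, lifting))
  next
    assume a: "inj_on ?N {..<d}"
    show "inj_on (\<lambda>i. eta ^ ?N i) {..<d}"
    proof (rule inj_onI)
      fix i j assume ij: "i \<in> {..<d}" "j \<in> {..<d}" "eta ^ ?N i = eta ^ ?N j"
      have "?N i = ?N j" using ij(3) by (rule eta_inj[rotated 2]) (use d3 in auto)
      then show "i = j" using inj_onD[OF a] ij by blast
    qed
  qed
  finally show ?thesis .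
qed

end

context cor begin

lemma cond_star_iff: "cond_star d k s t TYPE('a) \<longleftrightarrow> (\<forall>i. 0 < i \<and> i < d \<longrightarrow> B i = 0)"
proof
  assume cs: "cond_star d k s t TYPE('a)"
  show "\<forall>i. 0 < i \<and> i < d \<longrightarrow> B i = 0"
  proof (intro allI impI)
    fix i assume i: "0 < i \<and> i < d"
    let ?z = "w ^ (i * e)"
    have "?z ^ d = (w ^ d) ^ (i * e)" by (simp add: power_mult[symmetric] mult.commute)
    then have zmu: "?z \<in> roots_unity d" using ord by (simp add: roots_unity_def has_order_def)
    have ndi: "\<not> d dvd i" using i by (auto dest: dvd_imp_le)
    have "\<not> d dvd (i * e)" using ndi nde by (simp add: prime_dvd_mult_iff[OF dprime])
    then have "?z \<noteq> 1" using ho_pow_eq_1[OF ord] by simp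
    then have z1: "?z \<notin> roots_unity 1" by (simp add: roots_unity_def)
    have "R ?z \<in> roots_unity (s * t)" using cs zmu z1 unfolding cond_star_def R_def by blast
    then have "rho i = 1" by (simp add: rho_def roots_unity_def)
    then have "eta ^ B i = eta ^ 0" using B_prop i by simp
    moreover have "B i < d" using B_prop i by simp
    moreover have "0 < d" using d3 by simp
    ultimately show "B i = 0" using eta_inj[of "B i" 0] by simp
  qed
next
  assume h: "\<forall>i. 0 < i \<and> i < d \<longrightarrow> B i = 0"
  show "cond_star d k s t TYPE('a)"
    unfolding cond_star_def
  proof (intro allI impI)
    fix z :: 'a assume z: "z \<in> roots_unity d - roots_unity 1"
    have "z \<in> mu" using z by (simp add: mu_def)
    then have "z \<in> (\<lambda>j. w ^ j) ` {..<d}" using mu_w(1) by simp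
    then obtain j where j: "j < d" "z = w ^ j" by auto
    have j0: "j \<noteq> 0"
    proof
      assume "j = 0"
      then have "z = 1" using j by simp
      then show False using z by (simp add: roots_unity_def)
    qed
    obtain e' where e': "[e * e' = Suc 0] (mod d)" using cong_solve_coprime_nat[OF cop_ed] by auto
    define i where "i = (j * e') mod d"
    have "(i * e) mod d = ((j * e') mod d * e) mod d" unfolding i_def by simp
    also have "\<dots> = (j * e' * e) mod d" by (rule mod_mult_left_eq)
    also have "j * e' * e = j * (e * e')" by (simp only: mult_ac)
    also have "(j * (e * e')) mod d = (j * ((e * e') mod d)) mod d" by (rule mod_mult_right_eq[symmetric])
    also have "(e * e') mod d = Suc 0 mod d" using e' by (simp add: cong_def)
    also have "Suc 0 mod d = 1" using d3 by simp
    finally have ie: "(i * e) mod d = j mod d" by simp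
    then have wz: "w ^ (i * e) = z" using ho_pow_eq[OF ord] j by simp
    have i0: "i \<noteq> 0"
    proof
      assume "i = 0"
      then have "j mod d = 0" using ie by simp
      then have "j = 0" using j(1) by simp
      then show False using j0 by simp
    qed
    have id: "i < d" unfolding i_def using d3 by simp
    have "B i = 0" using h i0 id by simp
    then have "rho i = 1" using B_prop[of i] i0 id by simp
    then show "(z ^ k - inverse z ^ k) / (z - inverse z) \<in> roots_unity (s * t)"
      using wz by (simp add: rho_def R_def roots_unity_def)
  qed
qed

lemma d3_B: "d = 3 \<Longrightarrow> B 1 = 0"
proof -
  assume d: "d = 3"
  let ?u = "w ^ e"
  have uo: "has_order ?u 3" using ho_pow_coprime[OF ord cop_ed] d by simp
  have u3: "?u ^ 3 = 1" using uo by (simp add: has_order_def)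
  have u1: "?u \<noteq> 1" using uo by (auto simp: has_order_def)
  have unz: "?u \<noteq> 0" using ho_nz[OF uo] .
  have inv: "inverse ?u = ?u ^ 2"
  proof -
    have "?u * ?u ^ 2 = 1" using u3 by (simp add: power_Suc[symmetric] del: power_Suc)
    then show ?thesis by (metis inverse_unique)
  qed
  have u2: "?u - ?u ^ 2 \<noteq> 0"
  proof
    assume "?u - ?u ^ 2 = 0"
    then have "?u * ?u = ?u * 1" by (simp add: power2_eq_square)
    then show False using unz u1 by simp
  qed
  have k3: "k mod 3 = 1 \<or> k mod 3 = 2" using ndk d by presburger
  have pk: "?u ^ k = ?u ^ (k mod 3)" using ho_pow_mod[OF uo] .
  have "(?u ^ 2) ^ k = ?u ^ (2 * k)" by (simp add: power_mult)
  then have p2k: "(?u ^ 2) ^ k = ?u ^ ((2 * k) mod 3)"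
    using ho_pow_mod[OF uo, of "2 * k"] by simp
  have m2: "(2 * k) mod 3 = (2 * (k mod 3)) mod 3" by (simp add: mod_mult_right_eq)
  have Ru: "R ?u = 1 \<or> R ?u = -1"
  proof (cases "k mod 3 = 1")
    case True
    then have "R ?u = (?u - ?u ^ 2) / (?u - ?u ^ 2)"
      unfolding R_def inv pk p2k m2 by simp
    then show ?thesis using u2 by simp
  next
    case False
    then have k2: "k mod 3 = 2" using k3 by simp
    then have "R ?u = (?u ^ 2 - ?u) / (?u - ?u ^ 2)"
      unfolding R_def inv pk p2k m2 by simp
    also have "\<dots> = - 1" using u2 by (simp add: field_simps)
    finally show ?thesis by simp
  qed
  have r1: "rho 1 = 1 \<or> rho 1 = -1"
    using Ru unfolding rho_def by (cases "even (s * t)") auto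
  have "rho 1 \<in> mu" using rho_mu[of 1] d3 by simp
  then have "rho 1 ^ d = 1" by (simp add: mu_def roots_unity_def)
  then have "rho 1 ^ 3 = 1" using d by simp
  then have "rho 1 = 1" using r1 by auto
  then have "eta ^ B 1 = eta ^ 0" using B_prop[of 1] d by simp
  then show "B 1 = 0" using eta_inj B_prop[of 1] d by simp
qed

lemma bij_iff_N: "bij (fpoly r v k t :: 'a \<Rightarrow> 'a) \<longleftrightarrow> inj_on (\<lambda>i. (i + B i) mod d) {..<d}"
  using main_red bij_iff_inj by simp

lemma inj_N_list: "inj_on (\<lambda>i. (i + B i) mod d) {..<d} \<longleftrightarrow> distinct (map (\<lambda>i. (i + B i) mod d) [0..<d])"
  by (simp add: distinct_map lessThan_atLeast0)

lemma ratio_eta: "0 < i \<Longrightarrow> i < d \<Longrightarrow>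
   (ratio w k e (int i) ^ (s * t) = w powi (int c * m)) \<longleftrightarrow> int (B i) = m mod int d"
proof -
  assume i: "0 < i" "i < d"
  have "w powi (int c * m) = eta powi m" by (simp add: eta_def power_int_power)
  then have "(ratio w k e (int i) ^ (s * t) = w powi (int c * m)) \<longleftrightarrow> eta ^ B i = eta powi m"
    using ratio_B[OF i] by simp
  also have "\<dots> \<longleftrightarrow> int (B i) mod int d = m mod int d" by (rule ho_pow_powi_eq[OF eta_ord])
  also have "int (B i) mod int d = int (B i)" using B_lt[of i] i by simp
  finally show ?thesis .
qed

end

definition IMP :: "bool \<Rightarrow> bool \<Rightarrow> bool" where "IMP P Q \<longleftrightarrow> (P \<longrightarrow> Q)"
lemma IMP_cong [cong]: "P = P2 \<Longrightarrow> IMP P Q = IMP P2 Q" by simp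
lemma IMP_True: "IMP True Q = Q" and IMP_False: "IMP False Q = True" by (simp_all add: IMP_def)
lemma IMPD: "IMP P Q \<Longrightarrow> P \<Longrightarrow> Q" by (simp add: IMP_def)
definition ALLL :: "'b list \<Rightarrow> ('b \<Rightarrow> bool) \<Rightarrow> bool" where "ALLL xs P \<longleftrightarrow> (\<forall>x\<in>set xs. P x)"
lemma ALLL_cong [cong]: "xs = ys \<Longrightarrow> ALLL xs P = ALLL ys P" by simp
lemma ALLL_Nil: "ALLL [] P = True" and ALLL_Cons: "ALLL (x # xs) P = (P x \<and> ALLL xs P)" by (simp_all add: ALLL_def)
lemma ALLLD: "ALLL xs P \<Longrightarrow> x \<in> set xs \<Longrightarrow> P x" by (simp add: ALLL_def)

lemma less5_cases: "(x::nat) < 5 \<Longrightarrow> x = 0 \<or> x = 1 \<or> x = 2 \<or> x = 3 \<or> x = 4" by presburger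

lemma tri5_1: "(x::nat) < 5 \<Longrightarrow> (x, (1 + x) mod 5, (4 + x) mod 5) \<in> set [(0, 1, 4), (1, 2, 0), (2, 3, 1), (3, 4, 2), (4, 0, 3)]"
  by (drule less5_cases) (elim disjE; simp)

lemma tri5_2: "(x::nat) < 5 \<Longrightarrow> (x, (2 + x) mod 5, (3 + x) mod 5) \<in> set [(0, 2, 3), (1, 3, 4), (2, 4, 0), (3, 0, 1), (4, 1, 2)]"
  by (drule less5_cases) (elim disjE; simp)

lemma comb5_tab: "ALLL [(0, 1, 4), (1, 2, 0), (2, 3, 1), (3, 4, 2), (4, 0, 3)] (\<lambda>(x1::nat, a1::nat, b1::nat). IMP (0 \<noteq> a1 \<and> 0 \<noteq> b1) (ALLL [(0, 2, 3), (1, 3, 4), (2, 4, 0), (3, 0, 1), (4, 1, 2)] (\<lambda>(x2::nat, a2::nat, b2::nat). IMP (0 \<noteq> a2 \<and> a1 \<noteq> a2 \<and> a2 \<noteq> b1 \<and> 0 \<noteq> b2 \<and> a1 \<noteq> b2 \<and> b2 \<noteq> b1) ((x1, x2) \<in> {(0, 0)}))))"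
  by (simp add: IMP_True IMP_False ALLL_Nil ALLL_Cons)

lemma comb5:
  fixes x1 x2 :: nat
  assumes h1: "x1 < 5" and h2: "x2 < 5"
  shows "distinct [0, (1 + x1) mod 5, (2 + x2) mod 5, (3 + x2) mod 5, (4 + x1) mod 5] \<longleftrightarrow> (x1, x2) \<in> {(0, 0)}"
proof
  assume D: "distinct [0, (1 + x1) mod 5, (2 + x2) mod 5, (3 + x2) mod 5, (4 + x1) mod 5]"
  note s0 = comb5_tab
  have c1: "(0 \<noteq> ((1 + x1) mod 5) \<and> 0 \<noteq> ((4 + x1) mod 5))" using D by simp
  note s1 = IMPD[OF ALLLD[OF s0 tri5_1[OF h1], unfolded prod.case] c1]
  have c2: "(0 \<noteq> ((2 + x2) mod 5) \<and> ((1 + x1) mod 5) \<noteq> ((2 + x2) mod 5) \<and> ((2 + x2) mod 5) \<noteq> ((4 + x1) mod 5) \<and> 0 \<noteq> ((3 + x2) mod 5) \<and> ((1 + x1) mod 5) \<noteq> ((3 + x2) mod 5) \<and> ((3 + x2) mod 5) \<noteq> ((4 + x1) mod 5))" using D by simp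
  note s2 = IMPD[OF ALLLD[OF s1 tri5_2[OF h2], unfolded prod.case] c2]
  show "(x1, x2) \<in> {(0, 0)}" by (rule s2)
next
  assume "(x1, x2) \<in> {(0, 0)}"
  then show "distinct [0, (1 + x1) mod 5, (2 + x2) mod 5, (3 + x2) mod 5, (4 + x1) mod 5]" by (simp only: insert_iff empty_iff prod.inject) (elim disjE conjE; simp)
qed

lemma less7_cases: "(x::nat) < 7 \<Longrightarrow> x = 0 \<or> x = 1 \<or> x = 2 \<or> x = 3 \<or> x = 4 \<or> x = 5 \<or> x = 6" by presburger

lemma tri7_1: "(x::nat) < 7 \<Longrightarrow> (x, (1 + x) mod 7, (6 + x) mod 7) \<in> set [(0, 1, 6), (1, 2, 0), (2, 3, 1), (3, 4, 2), (4, 5, 3), (5, 6, 4), (6, 0, 5)]"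
  by (drule less7_cases) (elim disjE; simp)

lemma tri7_2: "(x::nat) < 7 \<Longrightarrow> (x, (2 + x) mod 7, (5 + x) mod 7) \<in> set [(0, 2, 5), (1, 3, 6), (2, 4, 0), (3, 5, 1), (4, 6, 2), (5, 0, 3), (6, 1, 4)]"
  by (drule less7_cases) (elim disjE; simp)

lemma tri7_3: "(x::nat) < 7 \<Longrightarrow> (x, (3 + x) mod 7, (4 + x) mod 7) \<in> set [(0, 3, 4), (1, 4, 5), (2, 5, 6), (3, 6, 0), (4, 0, 1), (5, 1, 2), (6, 2, 3)]"
  by (drule less7_cases) (elim disjE; simp)

lemma comb7_tab: "ALLL [(0, 1, 6), (1, 2, 0), (2, 3, 1), (3, 4, 2), (4, 5, 3), (5, 6, 4), (6, 0, 5)] (\<lambda>(x1::nat, a1::nat, b1::nat). IMP (0 \<noteq> a1 \<and> 0 \<noteq> b1) (ALLL [(0, 2, 5), (1, 3, 6), (2, 4, 0), (3, 5, 1), (4, 6, 2), (5, 0, 3), (6, 1, 4)] (\<lambda>(x2::nat, a2::nat, b2::nat). IMP (0 \<noteq> a2 \<and> a1 \<noteq> a2 \<and> a2 \<noteq> b1 \<and> 0 \<noteq> b2 \<and> a1 \<noteq> b2 \<and> b2 \<noteq> b1) (ALLL [(0, 3, 4), (1, 4, 5), (2, 5, 6), (3, 6, 0), (4, 0, 1), (5, 1, 2), (6, 2, 3)] (\<lambda>(x3::nat, a3::nat, b3::nat). IMP (0 \<noteq> a3 \<and> a1 \<noteq> a3 \<and> a3 \<noteq> b1 \<and> a2 \<noteq>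 a3 \<and> a3 \<noteq> b2 \<and> 0 \<noteq> b3 \<and> a1 \<noteq> b3 \<and> b3 \<noteq> b1 \<and> a2 \<noteq> b3 \<and> b3 \<noteq> b2) ((x1, x2, x3) \<in> {(0, 0, 0), (2, 4, 1), (5, 3, 6)}))))))"
  by (simp add: IMP_True IMP_False ALLL_Nil ALLL_Cons)

lemma comb7:
  fixes x1 x2 x3 :: nat
  assumes h1: "x1 < 7" and h2: "x2 < 7" and h3: "x3 < 7"
  shows "distinct [0, (1 + x1) mod 7, (2 + x2) mod 7, (3 + x3) mod 7, (4 + x3) mod 7, (5 + x2) mod 7, (6 + x1) mod 7] \<longleftrightarrow> (x1, x2, x3) \<in> {(0, 0, 0), (2, 4, 1), (5, 3, 6)}"
proof
  assume D: "distinct [0, (1 + x1) mod 7, (2 + x2) mod 7, (3 + x3) mod 7, (4 + x3) mod 7, (5 + x2) mod 7, (6 + x1) mod 7]"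
  note s0 = comb7_tab
  have c1: "(0 \<noteq> ((1 + x1) mod 7) \<and> 0 \<noteq> ((6 + x1) mod 7))" using D by simp
  note s1 = IMPD[OF ALLLD[OF s0 tri7_1[OF h1], unfolded prod.case] c1]
  have c2: "(0 \<noteq> ((2 + x2) mod 7) \<and> ((1 + x1) mod 7) \<noteq> ((2 + x2) mod 7) \<and> ((2 + x2) mod 7) \<noteq> ((6 + x1) mod 7) \<and> 0 \<noteq> ((5 + x2) mod 7) \<and> ((1 + x1) mod 7) \<noteq> ((5 + x2) mod 7) \<and> ((5 + x2) mod 7) \<noteq> ((6 + x1) mod 7))" using D by simp
  note s2 = IMPD[OF ALLLD[OF s1 tri7_2[OF h2], unfolded prod.case] c2]
  have c3: "(0 \<noteq> ((3 + x3) mod 7) \<and> ((1 + x1) mod 7) \<noteq> ((3 + x3) mod 7) \<and> ((3 + x3) mod 7) \<noteq> ((6 + x1) mod 7) \<and> ((2 + x2) mod 7) \<noteq> ((3 + x3) mod 7) \<and> ((3 + x3) mod 7) \<noteq> ((5 + x2) mod 7) \<and> 0 \<noteq> ((4 + x3) mod 7) \<and> ((1 + x1) mod 7) \<noteq> ((4 + x3) mod 7) \<and> ((4 + x3) mod 7) \<noteq> ((6 + x1) mod 7) \<and> ((2 + x2) mod 7) \<noteq> ((4 + x3) mod 7) \<and> ((4 + x3) mod 7) \<noteq> ((5 + x2) mod 7))" using D by simp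
  note s3 = IMPD[OF ALLLD[OF s2 tri7_3[OF h3], unfolded prod.case] c3]
  show "(x1, x2, x3) \<in> {(0, 0, 0), (2, 4, 1), (5, 3, 6)}" by (rule s3)
next
  assume "(x1, x2, x3) \<in> {(0, 0, 0), (2, 4, 1), (5, 3, 6)}"
  then show "distinct [0, (1 + x1) mod 7, (2 + x2) mod 7, (3 + x3) mod 7, (4 + x3) mod 7, (5 + x2) mod 7, (6 + x1) mod 7]" by (simp only: insert_iff empty_iff prod.inject) (elim disjE conjE; simp)
qed

lemma less11_cases: "(x::nat) < 11 \<Longrightarrow> x = 0 \<or> x = 1 \<or> x = 2 \<or> x = 3 \<or> x = 4 \<or> x = 5 \<or> x = 6 \<or> x = 7 \<or> x = 8 \<or> x = 9 \<or> x = 10" by presburger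

lemma tri11_1: "(x::nat) < 11 \<Longrightarrow> (x, (1 + x) mod 11, (10 + x) mod 11) \<in> set [(0, 1, 10), (1, 2, 0), (2, 3, 1), (3, 4, 2), (4, 5, 3), (5, 6, 4), (6, 7, 5), (7, 8, 6), (8, 9, 7), (9, 10, 8), (10, 0, 9)]"
  by (drule less11_cases) (elim disjE; simp)

lemma tri11_2: "(x::nat) < 11 \<Longrightarrow> (x, (2 + x) mod 11, (9 + x) mod 11) \<in> set [(0, 2, 9), (1, 3, 10), (2, 4, 0), (3, 5, 1), (4, 6, 2), (5, 7, 3), (6, 8, 4), (7, 9, 5), (8, 10, 6), (9, 0, 7), (10, 1, 8)]"
  by (drule less11_cases) (elim disjE; simp)

lemma tri11_3: "(x::nat) < 11 \<Longrightarrow> (x, (3 + x) mod 11, (8 + x) mod 11) \<in> set [(0, 3, 8), (1, 4, 9), (2, 5, 10), (3, 6, 0), (4, 7, 1), (5, 8, 2), (6, 9, 3), (7, 10, 4), (8, 0, 5), (9, 1, 6), (10, 2, 7)]"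
  by (drule less11_cases) (elim disjE; simp)

lemma tri11_4: "(x::nat) < 11 \<Longrightarrow> (x, (4 + x) mod 11, (7 + x) mod 11) \<in> set [(0, 4, 7), (1, 5, 8), (2, 6, 9), (3, 7, 10), (4, 8, 0), (5, 9, 1), (6, 10, 2), (7, 0, 3), (8, 1, 4), (9, 2, 5), (10, 3, 6)]"
  by (drule less11_cases) (elim disjE; simp)

lemma tri11_5: "(x::nat) < 11 \<Longrightarrow> (x, (5 + x) mod 11, (6 + x) mod 11) \<in> set [(0, 5, 6), (1, 6, 7), (2, 7, 8), (3, 8, 9), (4, 9, 10), (5, 10, 0), (6, 0, 1), (7, 1, 2), (8, 2, 3), (9, 3, 4), (10, 4, 5)]"
  by (drule less11_cases) (elim disjE; simp)

lemma comb11_tab: "ALLL [(0, 1, 10), (1, 2, 0), (2, 3, 1), (3, 4, 2), (4, 5, 3), (5, 6, 4), (6, 7, 5), (7, 8, 6), (8, 9, 7), (9, 10, 8), (10, 0, 9)] (\<lambda>(x1::nat, a1::nat, b1::nat). IMP (0 \<noteq> a1 \<and> 0 \<noteq> b1) (ALLL [(0, 2, 9), (1, 3, 10), (2, 4, 0), (3, 5, 1), (4, 6, 2), (5, 7, 3), (6, 8, 4), (7, 9, 5), (8, 10, 6), (9, 0, 7), (10, 1, 8)] (\<lambda>(x2::nat, a2::nat, b2::nat). IMP (0 \<noteq> a2 \<and> a1 \<noteq> a2 \<and> a2 \<noteq> b1 \<and> 0 \<noteq> b2 \<and> a1 \<noteq> b2 \<and> b2 \<noteq> b1) (ALLL [(0,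 3, 8), (1, 4, 9), (2, 5, 10), (3, 6, 0), (4, 7, 1), (5, 8, 2), (6, 9, 3), (7, 10, 4), (8, 0, 5), (9, 1, 6), (10, 2, 7)] (\<lambda>(x3::nat, a3::nat, b3::nat). IMP (0 \<noteq> a3 \<and> a1 \<noteq> a3 \<and> a3 \<noteq> b1 \<and> a2 \<noteq> a3 \<and> a3 \<noteq> b2 \<and> 0 \<noteq> b3 \<and> a1 \<noteq> b3 \<and> b3 \<noteq> b1 \<and> a2 \<noteq> b3 \<and> b3 \<noteq> b2) (ALLL [(0, 4, 7), (1, 5, 8), (2, 6, 9), (3, 7, 10), (4, 8, 0), (5, 9, 1), (6, 10, 2), (7, 0, 3), (8, 1, 4), (9, 2, 5), (10, 3, 6)] (\<lambda>(x4::nat, a4::nat, b4::nat). IMP (0 \<noteq> a4 \<and> a1 \<noteq> a4 \<and> a4 \<noteq> b1 \<and> a2 \<noteq> a4 \<and> a4 \<noteq> b2 \<and> a3 \<noteq> a4 \<and> a4 \<noteq> b3 \<and> 0 \<noteq> b4 \<and> a1 \<noteq> b4 \<and> b4 \<noteq> b1 \<and> a2 \<noteq> b4 \<and> b4 \<noteq> b2 \<and> a3 \<noteq> b4 \<and> b4 \<noteq> b3) (ALLL [(0, 5, 6), (1, 6, 7), (2, 7, 8), (3, 8, 9), (4, 9, 10), (5, 10, 0), (6, 0, 1), (7, 1, 2), (8, 2, 3), (9, 3, 4), (10, 4, 5)] (\<lambda>(x5::nat, a5::nat, b5::nat). IMP (0 \<noteq> a5 \<and> a1 \<noteq> a5 \<and>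 a5 \<noteq> b1 \<and> a2 \<noteq> a5 \<and> a5 \<noteq> b2 \<and> a3 \<noteq> a5 \<and> a5 \<noteq> b3 \<and> a4 \<noteq> a5 \<and> a5 \<noteq> b4 \<and> 0 \<noteq> b5 \<and> a1 \<noteq> b5 \<and> b5 \<noteq> b1 \<and> a2 \<noteq> b5 \<and> b5 \<noteq> b2 \<and> a3 \<noteq> b5 \<and> b5 \<noteq> b3 \<and> a4 \<noteq> b5 \<and> b5 \<noteq> b4) ((x1, x2, x3, x4, x5) \<in> {(0, 0, 0, 0, 0), (0, 5, 5, 2, 10), (0, 6, 6, 9, 1), (2, 0, 7, 1, 1), (2, 4, 2, 0, 3), (2, 8, 1, 9, 2), (3, 5, 9, 1, 4), (3, 10, 6, 3, 0), (4, 4, 7, 5, 2), (4, 8, 10, 8, 3), (4, 10, 1, 6, 1), (5, 1, 4, 9, 3), (5, 3, 6, 6, 2), (5, 7, 0, 3, 7), (6, 4, 0, 8, 4), (6, 8, 5, 5, 9), (6, 10, 7, 2, 8), (7, 1, 10, 5, 10), (7, 3, 1, 3, 8), (7, 7, 4, 6, 9), (8, 1, 5, 8, 0), (8, 6, 2, 10, 7), (9, 0, 4, 10, 10), (9, 3, 10, 2, 9), (9, 7, 9, 0, 8)}))))))))))"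
  by (simp add: IMP_True IMP_False ALLL_Nil ALLL_Cons)

lemma comb11:
  fixes x1 x2 x3 x4 x5 :: nat
  assumes h1: "x1 < 11" and h2: "x2 < 11" and h3: "x3 < 11" and h4: "x4 < 11" and h5: "x5 < 11"
  shows "distinct [0, (1 + x1) mod 11, (2 + x2) mod 11, (3 + x3) mod 11, (4 + x4) mod 11, (5 + x5) mod 11, (6 + x5) mod 11, (7 + x4) mod 11, (8 + x3) mod 11, (9 + x2) mod 11, (10 + x1) mod 11] \<longleftrightarrow> (x1, x2, x3, x4, x5) \<in> {(0, 0, 0, 0, 0), (0, 5, 5, 2, 10), (0, 6, 6, 9, 1), (2, 0, 7, 1, 1), (2, 4, 2, 0, 3), (2, 8, 1, 9, 2), (3, 5, 9, 1, 4), (3, 10, 6, 3, 0), (4, 4, 7, 5, 2), (4, 8, 10, 8, 3), (4, 10, 1, 6, 1), (5, 1, 4, 9, 3), (5, 3, 6, 6, 2), (5, 7, 0, 3, 7), (6, 4, 0, 8, 4), (6, 8, 5, 5, 9), (6, 10, 7, 2, 8), (7, 1, 10, 5, 10), (7, 3, 1, 3, 8), (7, 7, 4, 6, 9), (8, 1, 5, 8, 0), (8, 6, 2, 10, 7), (9, 0, 4, 10, 10), (9, 3, 10, 2, 9), (9, 7, 9, 0, 8)}"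
proof
  assume D: "distinct [0, (1 + x1) mod 11, (2 + x2) mod 11, (3 + x3) mod 11, (4 + x4) mod 11, (5 + x5) mod 11, (6 + x5) mod 11, (7 + x4) mod 11, (8 + x3) mod 11, (9 + x2) mod 11, (10 + x1) mod 11]"
  note s0 = comb11_tab
  have c1: "(0 \<noteq> ((1 + x1) mod 11) \<and> 0 \<noteq> ((10 + x1) mod 11))" using D by simp
  note s1 = IMPD[OF ALLLD[OF s0 tri11_1[OF h1], unfolded prod.case] c1]
  have c2: "(0 \<noteq> ((2 + x2) mod 11) \<and> ((1 + x1) mod 11) \<noteq> ((2 + x2) mod 11) \<and> ((2 + x2) mod 11) \<noteq> ((10 + x1) mod 11) \<and> 0 \<noteq> ((9 + x2) mod 11) \<and> ((1 + x1) mod 11) \<noteq> ((9 + x2) mod 11) \<and> ((9 + x2) mod 11) \<noteq> ((10 + x1) mod 11))" using D by simp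
  note s2 = IMPD[OF ALLLD[OF s1 tri11_2[OF h2], unfolded prod.case] c2]
  have c3: "(0 \<noteq> ((3 + x3) mod 11) \<and> ((1 + x1) mod 11) \<noteq> ((3 + x3) mod 11) \<and> ((3 + x3) mod 11) \<noteq> ((10 + x1) mod 11) \<and> ((2 + x2) mod 11) \<noteq> ((3 + x3) mod 11) \<and> ((3 + x3) mod 11) \<noteq> ((9 + x2) mod 11) \<and> 0 \<noteq> ((8 + x3) mod 11) \<and> ((1 + x1) mod 11) \<noteq> ((8 + x3) mod 11) \<and> ((8 + x3) mod 11) \<noteq> ((10 + x1) mod 11) \<and> ((2 + x2) mod 11) \<noteq> ((8 + x3) mod 11) \<and> ((8 + x3) mod 11) \<noteq> ((9 + x2) mod 11))" using D by simp
  note s3 = IMPD[OF ALLLD[OF s2 tri11_3[OF h3], unfolded prod.case] c3]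
  have c4: "(0 \<noteq> ((4 + x4) mod 11) \<and> ((1 + x1) mod 11) \<noteq> ((4 + x4) mod 11) \<and> ((4 + x4) mod 11) \<noteq> ((10 + x1) mod 11) \<and> ((2 + x2) mod 11) \<noteq> ((4 + x4) mod 11) \<and> ((4 + x4) mod 11) \<noteq> ((9 + x2) mod 11) \<and> ((3 + x3) mod 11) \<noteq> ((4 + x4) mod 11) \<and> ((4 + x4) mod 11) \<noteq> ((8 + x3) mod 11) \<and> 0 \<noteq> ((7 + x4) mod 11) \<and> ((1 + x1) mod 11) \<noteq> ((7 + x4) mod 11) \<and> ((7 + x4) mod 11) \<noteq> ((10 + x1) mod 11) \<and> ((2 + x2) mod 11) \<noteq> ((7 + x4) mod 11) \<and> ((7 + x4) mod 11) \<noteq> ((9 + x2) mod 11) \<and> ((3 + x3) mod 11) \<noteq> ((7 + x4) mod 11) \<and> ((7 + x4) mod 11) \<noteq> ((8 + x3) mod 11))" using D by simp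
  note s4 = IMPD[OF ALLLD[OF s3 tri11_4[OF h4], unfolded prod.case] c4]
  have c5: "(0 \<noteq> ((5 + x5) mod 11) \<and> ((1 + x1) mod 11) \<noteq> ((5 + x5) mod 11) \<and> ((5 + x5) mod 11) \<noteq> ((10 + x1) mod 11) \<and> ((2 + x2) mod 11) \<noteq> ((5 + x5) mod 11) \<and> ((5 + x5) mod 11) \<noteq> ((9 + x2) mod 11) \<and> ((3 + x3) mod 11) \<noteq> ((5 + x5) mod 11) \<and> ((5 + x5) mod 11) \<noteq> ((8 + x3) mod 11) \<and> ((4 + x4) mod 11) \<noteq> ((5 + x5) mod 11) \<and> ((5 + x5) mod 11) \<noteq> ((7 + x4) mod 11) \<and> 0 \<noteq> ((6 + x5) mod 11) \<and> ((1 + x1) mod 11) \<noteq> ((6 + x5) mod 11) \<and> ((6 + x5) mod 11) \<noteq> ((10 + x1) mod 11) \<and> ((2 + x2) mod 11) \<noteq> ((6 + x5) mod 11) \<and> ((6 + x5) mod 11) \<noteq> ((9 + x2) mod 11) \<and> ((3 + x3) mod 11) \<noteq> ((6 + x5) mod 11) \<and> ((6 + x5) mod 11) \<noteq> ((8 + x3) mod 11) \<and> ((4 + x4) mod 11) \<noteq> ((6 + x5) mod 11) \<and> ((6 + x5) mod 11) \<noteq> ((7 + x4) mod 11))" using D by simp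
  note s5 = IMPD[OF ALLLD[OF s4 tri11_5[OF h5], unfolded prod.case] c5]
  show "(x1, x2, x3, x4, x5) \<in> {(0, 0, 0, 0, 0), (0, 5, 5, 2, 10), (0, 6, 6, 9, 1), (2, 0, 7, 1, 1), (2, 4, 2, 0, 3), (2, 8, 1, 9, 2), (3, 5, 9, 1, 4), (3, 10, 6, 3, 0), (4, 4, 7, 5, 2), (4, 8, 10, 8, 3), (4, 10, 1, 6, 1), (5, 1, 4, 9, 3), (5, 3, 6, 6, 2), (5, 7, 0, 3, 7), (6, 4, 0, 8, 4), (6, 8, 5, 5, 9), (6, 10, 7, 2, 8), (7, 1, 10, 5, 10), (7, 3, 1, 3, 8), (7, 7, 4, 6, 9), (8, 1, 5, 8, 0), (8, 6, 2, 10, 7), (9, 0, 4, 10, 10), (9, 3, 10, 2, 9), (9, 7, 9, 0, 8)}" by (rule s5)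
next
  assume "(x1, x2, x3, x4, x5) \<in> {(0, 0, 0, 0, 0), (0, 5, 5, 2, 10), (0, 6, 6, 9, 1), (2, 0, 7, 1, 1), (2, 4, 2, 0, 3), (2, 8, 1, 9, 2), (3, 5, 9, 1, 4), (3, 10, 6, 3, 0), (4, 4, 7, 5, 2), (4, 8, 10, 8, 3), (4, 10, 1, 6, 1), (5, 1, 4, 9, 3), (5, 3, 6, 6, 2), (5, 7, 0, 3, 7), (6, 4, 0, 8, 4), (6, 8, 5, 5, 9), (6, 10, 7, 2, 8), (7, 1, 10, 5, 10), (7, 3, 1, 3, 8), (7, 7, 4, 6, 9), (8, 1, 5, 8, 0), (8, 6, 2, 10, 7), (9, 0, 4, 10, 10), (9, 3, 10, 2, 9), (9, 7, 9, 0, 8)}"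
  then show "distinct [0, (1 + x1) mod 11, (2 + x2) mod 11, (3 + x3) mod 11, (4 + x4) mod 11, (5 + x5) mod 11, (6 + x5) mod 11, (7 + x4) mod 11, (8 + x3) mod 11, (9 + x2) mod 11, (10 + x1) mod 11]" by (simp only: insert_iff empty_iff prod.inject) (elim disjE conjE; simp)
qed

lemma int11_cases: "0 \<le> (x::int) \<Longrightarrow> x < 11 \<Longrightarrow> x = 0 \<or> x = 1 \<or> x = 2 \<or> x = 3 \<or> x = 4 \<or> x = 5 \<or> x = 6 \<or> x = 7 \<or> x = 8 \<or> x = 9 \<or> x = 10"
  by presburger

lemma sq11_eq: "sq11 = {1, 3, 4, 5, 9}"
proof -
  have key: "(\<exists>j::int. [j ^ 2 = i] (mod 11)) \<longleftrightarrow> (\<exists>j\<in>{0,1,2,3,4,5,6,7,8,9,10::int}. [j ^ 2 = i] (mod 11))" for i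
  proof
    assume "\<exists>j. [j ^ 2 = i] (mod 11)"
    then obtain j where j: "[j ^ 2 = i] (mod 11)" by blast
    have "[(j mod 11) ^ 2 = j ^ 2] (mod 11)" by (simp add: cong_def power_mod)
    then have c: "[(j mod 11) ^ 2 = i] (mod 11)" using j by (rule cong_trans)
    have "0 \<le> j mod 11" "j mod 11 < 11" by simp_all
    then have "j mod 11 \<in> {0,1,2,3,4,5,6,7,8,9,10::int}" using int11_cases[of "j mod 11"] by simp
    then show "\<exists>j\<in>{0,1,2,3,4,5,6,7,8,9,10::int}. [j ^ 2 = i] (mod 11)" using c by (rule bexI[rotated])
  qed blast
  have "i \<in> sq11 \<longleftrightarrow> i \<in> {1, 3, 4, 5, 9}" for i :: int
    proof (cases "1 \<le> i \<and> i \<le> 10")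
      case True
      then have "i = 1 \<or> i = 2 \<or> i = 3 \<or> i = 4 \<or> i = 5 \<or> i = 6 \<or> i = 7 \<or> i = 8 \<or> i = 9 \<or> i = 10"
        by presburger
      then show ?thesis unfolding sq11_def key by (elim disjE) (simp_all add: cong_def)
    next
      case False
      then show ?thesis unfolding sq11_def by auto
    qed
  then show ?thesis by blast
qed

lemma int10_cases: "(m::int) \<in> {1..10} \<longleftrightarrow> m \<in> {1,2,3,4,5,6,7,8,9,10}"
  by (simp only: atLeastAtMost_iff insert_iff empty_iff) presburger

lemma C11_eq: "C11 = (\<lambda>m i. m * i) ` {3, -3, 5, -5}
   \<union> (\<lambda>m i. 5 * m^3 * i^4 + m^7 * i^3 - 2 * m * i^2 - 4 * m^5 * i) ` {1,2,3,4,5,6,7,8,9,10}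
   \<union> (\<lambda>m i. 4 * m^3 * i^4 + m^7 * i^3 - 2 * m * i^2 - 5 * m^5 * i) ` {1,2,3,4,5,6,7,8,9,10}"
proof -
  have a: "{m::int. m \<in> {3, -3, 5, -5}} = {3, -3, 5, -5}" by (simp only: Collect_mem_eq)
  have b: "{m::int. 1 \<le> m \<and> m \<le> 10} = {1,2,3,4,5,6,7,8,9,10}"
    using int10_cases[unfolded atLeastAtMost_iff] by blast
  show ?thesis unfolding C11_def setcompr_eq_image a b by (rule refl)
qed

lemma C11_char:
  fixes x1 x2 x3 x4 x5 :: nat
  shows "(\<exists>\<psi>\<in>C11. int x1 = \<psi> 1 mod 11 \<and> int x2 = \<psi> 9 mod 11 \<and> int x3 = \<psi> 3 mod 11
            \<and> int x4 = \<psi> 4 mod 11 \<and> int x5 = \<psi> 5 mod 11)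
     \<longleftrightarrow> (x1, x2, x3, x4, x5) \<in> {(9, 3, 10, 2, 9), (7, 1, 10, 5, 10), (7, 3, 1, 3, 8), (6, 8, 5, 5, 9), (4, 4, 7, 5, 2), (7, 7, 4, 6, 9), (5, 3, 6, 6, 2), (4, 8, 10, 8, 3), (4, 10, 1, 6, 1), (2, 8, 1, 9, 2), (0, 6, 6, 9, 1), (3, 10, 6, 3, 0), (2, 4, 2, 0, 3), (5, 7, 0, 3, 7), (9, 0, 4, 10, 10), (2, 0, 7, 1, 1), (6, 4, 0, 8, 4), (9, 7, 9, 0, 8), (8, 1, 5, 8, 0), (0, 5, 5, 2, 10), (3, 5, 9, 1, 4), (8, 6, 2, 10, 7), (5, 1, 4, 9, 3), (6, 10, 7, 2, 8)}"
  unfolding C11_eq by simp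

lemma all5: "(\<forall>i::nat. 0 < i \<and> i < 5 \<longrightarrow> P i) \<longleftrightarrow> P 1 \<and> P 2 \<and> P 3 \<and> P 4"
proof
  assume h: "P 1 \<and> P 2 \<and> P 3 \<and> P 4"
  show "\<forall>i::nat. 0 < i \<and> i < 5 \<longrightarrow> P i"
  proof (intro allI impI)
    fix i :: nat assume "0 < i \<and> i < 5"
    then have "i = 1 \<or> i = 2 \<or> i = 3 \<or> i = 4" by presburger
    then show "P i" using h by (elim disjE) simp_all
  qed
qed simp

lemma all7: "(\<forall>i::nat. 0 < i \<and> i < 7 \<longrightarrow> P i) \<longleftrightarrow> P 1 \<and> P 2 \<and> P 3 \<and> P 4 \<and> P 5 \<and> P 6"
proof
  assume h: "P 1 \<and> P 2 \<and> P 3 \<and> P 4 \<and> P 5 \<and> P 6"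
  show "\<forall>i::nat. 0 < i \<and> i < 7 \<longrightarrow> P i"
  proof (intro allI impI)
    fix i :: nat assume "0 < i \<and> i < 7"
    then have "i = 1 \<or> i = 2 \<or> i = 3 \<or> i = 4 \<or> i = 5 \<or> i = 6" by presburger
    then show "P i" using h by (elim disjE) simp_all
  qed
qed simp

lemma all11: "(\<forall>i::nat. 0 < i \<and> i < 11 \<longrightarrow> P i) \<longleftrightarrow> P 1 \<and> P 2 \<and> P 3 \<and> P 4 \<and> P 5 \<and> P 6 \<and> P 7 \<and> P 8 \<and> P 9 \<and> P 10"
proof
  assume h: "P 1 \<and> P 2 \<and> P 3 \<and> P 4 \<and> P 5 \<and> P 6 \<and> P 7 \<and> P 8 \<and> P 9 \<and> P 10"
  show "\<forall>i::nat. 0 < i \<and> i < 11 \<longrightarrow> P i"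
  proof (intro allI impI)
    fix i :: nat assume "0 < i \<and> i < 11"
    then have "i = 1 \<or> i = 2 \<or> i = 3 \<or> i = 4 \<or> i = 5 \<or> i = 6 \<or> i = 7 \<or> i = 8 \<or> i = 9 \<or> i = 10" by presburger
    then show "P i" using h by (elim disjE) simp_all
  qed
qed simp

lemma S25_eq: "{(0, 0, 0, 0, 0), (0, 5, 5, 2, 10), (0, 6, 6, 9, 1), (2, 0, 7, 1, 1), (2, 4, 2, 0, 3), (2, 8, 1, 9, 2), (3, 5, 9, 1, 4), (3, 10, 6, 3, 0), (4, 4, 7, 5, 2), (4, 8, 10, 8, 3), (4, 10, 1, 6, 1), (5, 1, 4, 9, 3), (5, 3, 6, 6, 2), (5, 7, 0, 3, 7), (6, 4, 0, 8, 4), (6, 8, 5, 5, 9), (6, 10, 7, 2, 8), (7, 1, 10, 5, 10), (7, 3, 1, 3, 8), (7, 7, 4, 6, 9), (8, 1, 5, 8, 0), (8, 6, 2, 10, 7), (9, 0, 4, 10, 10), (9, 3, 10, 2, 9), (9, 7, 9, 0, 8)} = insert (0, 0, 0, 0, 0) {(9, 3, 10, 2, 9), (7, 1, 10, 5, 10), (7, 3, 1, 3, 8), (6, 8, 5, 5, 9), (4, 4, 7, 5, 2), (7, 7, 4, 6, 9), (5, 3, 6, 6, 2), (4, 8, 10, 8, 3), (4, 10, 1, 6, 1), (2, 8, 1, 9, 2), (0, 6, 6, 9, 1), (3, 10, 6, 3, 0), (2, 4, 2, 0, 3), (5, 7, 0, 3, 7), (9, 0, 4, 10, 10), (2, 0,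 7, 1, 1), (6, 4, 0, 8, 4), (9, 7, 9, 0, 8), (8, 1, 5, 8, 0), (0, 5, 5, 2, 10), (3, 5, 9, 1, 4), (8, 6, 2, 10, 7), (5, 1, 4, 9, 3), (6, 10, 7, 2, 8)}"
  by auto

context cor begin

lemma allB: "(\<forall>i. 0 < i \<and> i < d \<longrightarrow> B i = 0) \<Longrightarrow> inj_on (\<lambda>i. (i + B i) mod d) {..<d}"
proof -
  assume h: "\<forall>i. 0 < i \<and> i < d \<longrightarrow> B i = 0"
  have "inj_on (\<lambda>i. (i + B i) mod d) {..<d} \<longleftrightarrow> inj_on (\<lambda>i. i) {..<d}"
  proof (rule inj_on_cong)
    fix i assume i: "i \<in> {..<d}"
    then have "B i = 0" using h B0 by (cases "i = 0") auto
    then show "(i + B i) mod d = i" using i by simp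
  qed
  then show ?thesis by simp
qed

lemma part_a: "cond_star d k s t TYPE('a) \<Longrightarrow> bij (fpoly r v k t :: 'a \<Rightarrow> 'a)"
  using cond_star_iff allB bij_iff_N by blast

lemma part_b: "d = 3 \<Longrightarrow> bij (fpoly r v k t :: 'a \<Rightarrow> 'a)"
proof -
  assume d: "d = 3"
  have b1: "B 1 = 0" using d3_B d .
  have b2: "B 2 = 0" using B_sym[of 1] d b1 by simp
  have "\<forall>i. 0 < i \<and> i < d \<longrightarrow> B i = 0"
  proof (intro allI impI)
    fix i assume "0 < i \<and> i < d"
    then have "i = 1 \<or> i = 2" using d by auto
    then show "B i = 0" using b1 b2 by auto
  qed
  then show ?thesis using allB bij_iff_N by blast
qed

lemma part_c: "d = 5 \<Longrightarrow> (bij (fpoly r v k t :: 'a \<Rightarrow> 'a) \<longleftrightarrow> cond_star d k s t TYPE('a))"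
proof -
  assume d: "d = 5"
  have s1: "B 4 = B 1" using B_sym[of 1] d by simp
  have s2: "B 3 = B 2" using B_sym[of 2] d by simp
  have l: "map (\<lambda>i. (i + B i) mod d) [0..<d] = [0, (1 + B 1) mod 5, (2 + B 2) mod 5, (3 + B 2) mod 5, (4 + B 1) mod 5]"
  proof -
    have u: "[0..<d] = [0, 1, 2, 3, 4]" using d by (simp add: upt_rec)
    show ?thesis unfolding u using d s1 s2 B0 by simp
  qed
  have lt: "B 1 < 5" "B 2 < 5" using B_lt d by auto
  have "bij (fpoly r v k t :: 'a \<Rightarrow> 'a) \<longleftrightarrow> (B 1, B 2) \<in> {(0, 0)}"
    using bij_iff_N inj_N_list l comb5[OF lt] by simp
  moreover have "cond_star d k s t TYPE('a) \<longleftrightarrow> B 1 = 0 \<and> B 2 = 0"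
    using cond_star_iff all5[of "\<lambda>i. B i = 0"] d s1 s2 by auto
  ultimately show ?thesis by simp
qed

lemma alt7_iff: "d = 7 \<Longrightarrow> (\<exists>\<epsilon>\<in>{1, -1::int}. \<forall>i\<in>{1, 2, 4::int}.
         ratio w k e i ^ (s * t) = w powi (2 * \<epsilon> * int c * i)) \<longleftrightarrow> (B 1, B 2, B 3) \<in> {(2, 4, 1), (5, 3, 6)}"
proof -
  assume d: "d = 7"
  have key: "(ratio w k e i ^ (s * t) = w powi (2 * \<epsilon> * int c * i)) \<longleftrightarrow> int (B (nat i)) = (2 * \<epsilon> * i) mod 7"
    if "i \<in> {1, 2, 4::int}" for \<epsilon> i
  proof -
    have i: "0 < nat i" "nat i < d" "int (nat i) = i" using that d by auto
    have eq: "2 * \<epsilon> * int c * i = int c * (2 * \<epsilon> * i)" by (simp add: mult_ac)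
    show ?thesis unfolding eq using ratio_eta[OF i(1) i(2), of "2 * \<epsilon> * i"] i(3) d by simp
  qed
  have "(\<exists>\<epsilon>\<in>{1, -1::int}. \<forall>i\<in>{1, 2, 4::int}. ratio w k e i ^ (s * t) = w powi (2 * \<epsilon> * int c * i))
     \<longleftrightarrow> (\<exists>\<epsilon>\<in>{1, -1::int}. \<forall>i\<in>{1, 2, 4::int}. int (B (nat i)) = (2 * \<epsilon> * i) mod 7)"
    apply (rule bex_cong[OF refl])
    apply (rule ball_cong[OF refl])
    by (rule key)
  also have "\<dots> \<longleftrightarrow> (B 1, B 2, B 4) \<in> {(2, 4, 1), (5, 3, 6)}" by auto
  also have "B 4 = B 3" using B_sym[of 3] d by simp
  finally show ?thesis .
qed

lemma part_d: "d = 7 \<Longrightarrow> (bij (fpoly r v k t :: 'a \<Rightarrow> 'a) \<longleftrightarrow> cond_star d k s t TYPE('a) \<or>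
             (\<exists>\<epsilon>\<in>{1, -1::int}. \<forall>i\<in>{1, 2, 4::int}.
                 ratio w k e i ^ (s * t) = w powi (2 * \<epsilon> * int c * i)))"
proof -
  assume d: "d = 7"
  have s1: "B 6 = B 1" using B_sym[of 1] d by simp
  have s2: "B 5 = B 2" using B_sym[of 2] d by simp
  have s3: "B 4 = B 3" using B_sym[of 3] d by simp
  have l: "map (\<lambda>i. (i + B i) mod d) [0..<d] = [0, (1 + B 1) mod 7, (2 + B 2) mod 7, (3 + B 3) mod 7,
      (4 + B 3) mod 7, (5 + B 2) mod 7, (6 + B 1) mod 7]"
  proof -
    have u: "[0..<d] = [0, 1, 2, 3, 4, 5, 6]" using d by (simp add: upt_rec)
    show ?thesis unfolding u using d s1 s2 s3 B0 by simp
  qed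
  have lt: "B 1 < 7" "B 2 < 7" "B 3 < 7" using B_lt d by auto
  have "bij (fpoly r v k t :: 'a \<Rightarrow> 'a) \<longleftrightarrow> (B 1, B 2, B 3) \<in> {(0, 0, 0), (2, 4, 1), (5, 3, 6)}"
    using bij_iff_N inj_N_list l comb7[OF lt] by simp
  moreover have "cond_star d k s t TYPE('a) \<longleftrightarrow> B 1 = 0 \<and> B 2 = 0 \<and> B 3 = 0"
    using cond_star_iff all7[of "\<lambda>i. B i = 0"] d s1 s2 s3 by auto
  ultimately show ?thesis using alt7_iff[OF d] by auto
qed

lemma alt11_iff: "d = 11 \<Longrightarrow> (\<exists>\<psi>\<in>C11. \<forall>i\<in>sq11.
                 ratio w k e i ^ (s * t) = w powi (int c * \<psi> i)) \<longleftrightarrow> (B 1, B 2, B 3, B 4, B 5) \<in> {(9, 3, 10, 2, 9), (7, 1, 10, 5, 10), (7, 3, 1, 3, 8), (6, 8, 5, 5, 9), (4, 4, 7, 5, 2), (7, 7, 4, 6, 9), (5, 3, 6, 6, 2), (4, 8, 10, 8, 3), (4, 10, 1, 6, 1), (2, 8, 1, 9, 2), (0, 6, 6, 9, 1), (3, 10, 6, 3, 0), (2, 4, 2, 0, 3), (5, 7, 0, 3, 7), (9, 0, 4, 10, 10), (2, 0, 7, 1, 1), (6, 4, 0, 8, 4), (9, 7, 9, 0, 8), (8, 1, 5, 8, 0), (0, 5, 5, 2, 10), (3, 5, 9, 1, 4), (8, 6, 2, 10, 7), (5, 1, 4, 9, 3), (6, 10, 7, 2, 8)}"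
proof -
  assume d: "d = 11"
  have key: "(ratio w k e i ^ (s * t) = w powi (int c * \<psi> i)) \<longleftrightarrow> int (B (nat i)) = \<psi> i mod 11"
    if "i \<in> {1, 3, 4, 5, 9::int}" for \<psi> :: "int \<Rightarrow> int" and i
  proof -
    have i: "0 < nat i" "nat i < d" "int (nat i) = i" using that d by auto
    show ?thesis using ratio_eta[OF i(1) i(2), of "\<psi> i"] i(3) d by simp
  qed
  have b9: "B 9 = B 2" using B_sym[of 2] d by simp
  have "(\<exists>\<psi>\<in>C11. \<forall>i\<in>sq11. ratio w k e i ^ (s * t) = w powi (int c * \<psi> i))
     \<longleftrightarrow> (\<exists>\<psi>\<in>C11. \<forall>i\<in>{1, 3, 4, 5, 9::int}. int (B (nat i)) = \<psi> i mod 11)"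
    unfolding sq11_eq
    apply (rule bex_cong[OF refl])
    apply (rule ball_cong[OF refl])
    by (rule key)
  also have "\<dots> \<longleftrightarrow> (\<exists>\<psi>\<in>C11. int (B 1) = \<psi> 1 mod 11 \<and> int (B 2) = \<psi> 9 mod 11 \<and> int (B 3) = \<psi> 3 mod 11
            \<and> int (B 4) = \<psi> 4 mod 11 \<and> int (B 5) = \<psi> 5 mod 11)"
    apply (rule bex_cong[OF refl])
    using b9 by auto
  also have "\<dots> \<longleftrightarrow> (B 1, B 2, B 3, B 4, B 5) \<in> {(9, 3, 10, 2, 9), (7, 1, 10, 5, 10), (7, 3, 1, 3, 8), (6, 8, 5, 5, 9), (4, 4, 7, 5, 2), (7, 7, 4, 6, 9), (5, 3, 6, 6, 2), (4, 8, 10, 8, 3), (4, 10, 1, 6, 1), (2, 8, 1, 9, 2), (0, 6, 6, 9, 1), (3, 10, 6, 3, 0), (2, 4, 2, 0, 3), (5, 7, 0, 3, 7), (9, 0, 4, 10, 10), (2, 0, 7, 1, 1), (6, 4, 0, 8, 4), (9, 7, 9, 0, 8), (8, 1, 5, 8, 0), (0, 5, 5, 2, 10), (3, 5, 9, 1, 4), (8, 6, 2, 10, 7), (5, 1, 4, 9, 3), (6, 10, 7, 2, 8)}" by (rule C11_char)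
  finally show ?thesis .
qed

lemma part_e: "d = 11 \<Longrightarrow> (bij (fpoly r v k t :: 'a \<Rightarrow> 'a) \<longleftrightarrow> cond_star d k s t TYPE('a) \<or>
             (\<exists>\<psi>\<in>C11. \<forall>i\<in>sq11.
                 ratio w k e i ^ (s * t) = w powi (int c * \<psi> i)))"
proof -
  assume d: "d = 11"
  have s1: "B 10 = B 1" using B_sym[of 1] d by simp
  have s2: "B 9 = B 2" using B_sym[of 2] d by simp
  have s3: "B 8 = B 3" using B_sym[of 3] d by simp
  have s4: "B 7 = B 4" using B_sym[of 4] d by simp
  have s5: "B 6 = B 5" using B_sym[of 5] d by simp
  have l: "map (\<lambda>i. (i + B i) mod d) [0..<d] = [0, (1 + B 1) mod 11, (2 + B 2) mod 11, (3 + B 3) mod 11,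
      (4 + B 4) mod 11, (5 + B 5) mod 11, (6 + B 5) mod 11, (7 + B 4) mod 11, (8 + B 3) mod 11,
      (9 + B 2) mod 11, (10 + B 1) mod 11]"
  proof -
    have u: "[0..<d] = [0, 1, 2, 3, 4, 5, 6, 7, 8, 9, 10]" using d by (simp add: upt_rec)
    show ?thesis unfolding u using d s1 s2 s3 s4 s5 B0 by simp
  qed
  have lt: "B 1 < 11" "B 2 < 11" "B 3 < 11" "B 4 < 11" "B 5 < 11" using B_lt d by auto
  have "bij (fpoly r v k t :: 'a \<Rightarrow> 'a) \<longleftrightarrow> (B 1, B 2, B 3, B 4, B 5) \<in> {(0, 0, 0, 0, 0), (0, 5, 5, 2, 10), (0, 6, 6, 9, 1), (2, 0, 7, 1, 1), (2, 4, 2, 0, 3), (2, 8, 1, 9, 2), (3, 5, 9, 1, 4), (3, 10, 6, 3, 0), (4, 4, 7, 5, 2), (4, 8, 10, 8, 3), (4, 10, 1, 6, 1), (5, 1, 4, 9, 3), (5, 3, 6, 6, 2), (5, 7, 0, 3, 7), (6, 4, 0, 8, 4), (6, 8, 5, 5, 9), (6, 10, 7, 2, 8), (7, 1, 10, 5, 10), (7, 3, 1, 3, 8), (7, 7, 4, 6, 9), (8, 1, 5, 8, 0), (8, 6, 2, 10, 7), (9, 0, 4, 10, 10), (9, 3, 10, 2, 9), (9, 7, 9, 0, 8)}"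
    using bij_iff_N inj_N_list l comb11[OF lt] by simp
  also have "\<dots> \<longleftrightarrow> (B 1, B 2, B 3, B 4, B 5) = (0, 0, 0, 0, 0) \<or> (B 1, B 2, B 3, B 4, B 5) \<in> {(9, 3, 10, 2, 9), (7, 1, 10, 5, 10), (7, 3, 1, 3, 8), (6, 8, 5, 5, 9), (4, 4, 7, 5, 2), (7, 7, 4, 6, 9), (5, 3, 6, 6, 2), (4, 8, 10, 8, 3), (4, 10, 1, 6, 1), (2, 8, 1, 9, 2), (0, 6, 6, 9, 1), (3, 10, 6, 3, 0), (2, 4, 2, 0, 3), (5, 7, 0, 3, 7), (9, 0, 4, 10, 10), (2, 0, 7, 1, 1), (6, 4, 0, 8, 4), (9, 7, 9, 0, 8), (8, 1, 5, 8, 0), (0, 5, 5, 2, 10), (3, 5, 9, 1, 4), (8, 6, 2, 10, 7), (5, 1, 4, 9, 3), (6, 10, 7, 2, 8)}"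
    unfolding S25_eq by simp
  finally have bi: "bij (fpoly r v k t :: 'a \<Rightarrow> 'a) \<longleftrightarrow> (B 1, B 2, B 3, B 4, B 5) = (0, 0, 0, 0, 0) \<or> (B 1, B 2, B 3, B 4, B 5) \<in> {(9, 3, 10, 2, 9), (7, 1, 10, 5, 10), (7, 3, 1, 3, 8), (6, 8, 5, 5, 9), (4, 4, 7, 5, 2), (7, 7, 4, 6, 9), (5, 3, 6, 6, 2), (4, 8, 10, 8, 3), (4, 10, 1, 6, 1), (2, 8, 1, 9, 2), (0, 6, 6, 9, 1), (3, 10, 6, 3, 0), (2, 4, 2, 0, 3), (5, 7, 0, 3, 7), (9, 0, 4, 10, 10), (2, 0, 7, 1, 1), (6, 4, 0, 8, 4), (9, 7, 9, 0, 8), (8, 1, 5, 8, 0), (0, 5, 5, 2, 10), (3, 5, 9, 1, 4), (8, 6, 2, 10, 7), (5, 1, 4, 9, 3), (6, 10, 7, 2, 8)}" .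
  have "cond_star d k s t TYPE('a) \<longleftrightarrow> B 1 = 0 \<and> B 2 = 0 \<and> B 3 = 0 \<and> B 4 = 0 \<and> B 5 = 0"
    using cond_star_iff all11[of "\<lambda>i. B i = 0"] d s1 s2 s3 s4 s5 by auto
  then show ?thesis using bi alt11_iff[OF d] by simp
qed

lemma main_conj:
  "(cond_star d k s t TYPE('a) \<longrightarrow> bij (fpoly r v k t :: 'a \<Rightarrow> 'a))
       \<and> (d = 3 \<longrightarrow> bij (fpoly r v k t :: 'a \<Rightarrow> 'a))
       \<and> (d = 5 \<longrightarrow> (bij (fpoly r v k t :: 'a \<Rightarrow> 'a) \<longleftrightarrow> cond_star d k s t TYPE('a)))
       \<and> (d = 7 \<longrightarrow> (bij (fpoly r v k t :: 'a \<Rightarrow> 'a) \<longleftrightarrow> cond_star d k s t TYPE('a) \<or>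
             (\<exists>\<epsilon>\<in>{1, -1::int}. \<forall>i\<in>{1, 2, 4::int}.
                 ratio w k e i ^ (s * t) = w powi (2 * \<epsilon> * int c * i))))
       \<and> (d = 11 \<longrightarrow> (bij (fpoly r v k t :: 'a \<Rightarrow> 'a) \<longleftrightarrow> cond_star d k s t TYPE('a) \<or>
             (\<exists>\<psi>\<in>C11. \<forall>i\<in>sq11.
                 ratio w k e i ^ (s * t) = w powi (int c * \<psi> i))))"
  using part_a part_b part_c part_d part_e by blast

end

theorem corollary3p5:
  fixes r v k t :: nat and \<omega> :: "'a::{finite,field}"
  defines "q \<equiv> card (UNIV :: 'a set)"
  defines "p \<equiv> semiring_char TYPE('a)"
  defines "s \<equiv> gcd v (q - 1)"
  defines "d \<equiv> (q - 1) div s"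
  defines "e \<equiv> v div s"
  defines "f \<equiv> (fpoly r v k t :: 'a \<Rightarrow> 'a)"
  defines "c \<equiv> 2 * r + (k - 1) * v * t"
  assumes pos: "0 < r" "0 < v" "0 < k" "0 < t"
  assumes gcd1: "gcd r s = 1" and gcd2: "gcd d k = 1"
  assumes gcd3: "gcd d (2 * r + v * t * (k - 1)) \<le> 2"
  assumes cong: "[int k ^ (s * t) = (-1) ^ ((d + 1) * (r + 1))] (mod int p)"
  assumes dprime: "prime d" and dodd: "odd d"
  assumes ord: "has_order \<omega> d"
  shows "(cond_star d k s t TYPE('a) \<longrightarrow> bij f)
       \<and> (d = 3 \<longrightarrow> bij f)
       \<and> (d = 5 \<longrightarrow> (bij f \<longleftrightarrow> cond_star d k s t TYPE('a)))
       \<and> (d = 7 \<longrightarrow> (bij f \<longleftrightarrow> cond_star d k s t TYPE('a) \<or>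
             (\<exists>\<epsilon>\<in>{1, -1::int}. \<forall>i\<in>{1, 2, 4::int}.
                 ratio \<omega> k e i ^ (s * t) = \<omega> powi (2 * \<epsilon> * int c * i))))
       \<and> (d = 11 \<longrightarrow> (bij f \<longleftrightarrow> cond_star d k s t TYPE('a) \<or>
             (\<exists>\<psi>\<in>C11. \<forall>i\<in>sq11.
                 ratio \<omega> k e i ^ (s * t) = \<omega> powi (int c * \<psi> i))))"
proof -
  interpret cor r v k t \<omega> q s d e c
    using pos gcd1 gcd2 gcd3 cong dprime dodd ord
    by unfold_locales (simp_all add: q_def s_def d_def e_def c_def p_def)
  show ?thesis using main_conj unfolding f_def .
qed

end
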